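(* Let $\zeta\in\mathbb{C}^*$. The set $\{\mathcal{S}_{\frac rs}(\zeta) : \frac rs>1\}$ (which equals $\{\mathcal{R}_{\frac rs}(\zeta) : \frac rs>1\}$) is finite if and only if $\zeta$ is a primitive $n$-th root of unity for some $n\in\{2,3,4,5\}$.
   Context: Let $q$ be a formal parameter, $R_q=\begin{pmatrix} q & 1\\ 0 & 1\end{pmatrix}$, $S_q=\begin{pmatrix} 0 & -q^{-1}\\ 1 & 0\end{pmatrix}$, and for integers $c_1,\dots,c_k$ put $M_q(c_1,\dots,c_k)=R_q^{c_1}S_q\cdots R_q^{c_k}S_q$. Every irreducible fraction $\frac{r}{s}>1$ ($r,s$ positive coprime integers) has a unique negative continued fraction expansion $\frac{r}{s}=c_1-\cfrac{1}{c_2-\cfrac{1}{\ddots-\cfrac{1}{c_k}}}$ with all $c_i\ge 2$; define polynomials $\mathcal{R}_{\frac rs}(q),\mathcal{S}_{\frac rs}(q)$ by $M_q(c_1,\dots,c_k)=\begin{pmatrix}\mathcal{R}_{\frac rs}(q) & *\\ \mathcal{S}_{\frac rs}(q) & *\end{pmatrix}$. *)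

theory Defs
  imports Complex_Main
begin

text \<open>2x2 complex matrices, written (a, b, c, d) for the matrix with rows (a b) and (c d).\<close>
type_synonym mat2 = "complex \<times> complex \<times> complex \<times> complex"

fun mat2_mult :: "mat2 \<Rightarrow> mat2 \<Rightarrow> mat2" where
  "mat2_mult (a, b, c, d) (a', b', c', d') =
     (a * a' + b * c', a * b' + b * d', c * a' + d * c', c * b' + d * d')"

definition mat2_id :: mat2 where "mat2_id = (1, 0, 0, 1)"

fun mat2_pow :: "mat2 \<Rightarrow> nat \<Rightarrow> mat2" where
  "mat2_pow A 0 = mat2_id"
| "mat2_pow A (Suc n) = mat2_mult A (mat2_pow A n)"

definition Rq :: "complex \<Rightarrow> mat2" where "Rq q = (q, 1, 0, 1)"
definition Sq :: "complex \<Rightarrow> mat2" where "Sq q = (0, - inverse q, 1, 0)"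

fun Mq :: "complex \<Rightarrow> int list \<Rightarrow> mat2" where
  "Mq q [] = mat2_id"
| "Mq q (c # cs) = mat2_mult (mat2_mult (mat2_pow (Rq q) (nat c)) (Sq q)) (Mq q cs)"

fun ncf :: "int list \<Rightarrow> rat" where
  "ncf [] = 0"
| "ncf [c] = of_int c"
| "ncf (c # cs) = of_int c - 1 / ncf cs"

definition ncf_expansion :: "rat \<Rightarrow> int list" where
  "ncf_expansion x = (THE cs. cs \<noteq> [] \<and> (\<forall>c\<in>set cs. c \<ge> 2) \<and> ncf cs = x)"

definition Rpoly :: "rat \<Rightarrow> complex \<Rightarrow> complex" where
  "Rpoly x q = fst (Mq q (ncf_expansion x))"
definition Spoly :: "rat \<Rightarrow> complex \<Rightarrow> complex" where
  "Spoly x q = fst (snd (snd (Mq q (ncf_expansion x))))"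

definition primitive_root_of_unity :: "nat \<Rightarrow> complex \<Rightarrow> bool" where
  "primitive_root_of_unity n z \<longleftrightarrow> n > 0 \<and> z ^ n = 1 \<and> (\<forall>m. 0 < m \<and> m < n \<longrightarrow> z ^ m \<noteq> 1)"

end

theory Submission
  imports Defs
begin

lemma mat2_mult_assoc: "mat2_mult (mat2_mult A B) C = mat2_mult A (mat2_mult B C)"
  by (cases A; cases B; cases C) (simp add: algebra_simps)

lemma mat2_mult_id_left[simp]: "mat2_mult mat2_id A = A"
  by (cases A) (simp add: mat2_id_def)
lemma mat2_mult_id_right[simp]: "mat2_mult A mat2_id = A"
  by (cases A) (simp add: mat2_id_def)

lemma mat2_pow_add: "mat2_pow A (m + k) = mat2_mult (mat2_pow A m) (mat2_pow A k)"
  by (induction m) (simp_all add: mat2_mult_assoc)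

fun mtr :: "mat2 \<Rightarrow> complex" where "mtr (a,b,c,d) = a + d"
fun mdet :: "mat2 \<Rightarrow> complex" where "mdet (a,b,c,d) = a*d - b*c"
fun madj :: "mat2 \<Rightarrow> mat2" where "madj (a,b,c,d) = (d, -b, -c, a)"
fun smul :: "complex \<Rightarrow> mat2 \<Rightarrow> mat2" where "smul s (a,b,c,d) = (s*a, s*b, s*c, s*d)"
definition minv :: "mat2 \<Rightarrow> mat2" where "minv X = smul (1 / mdet X) (madj X)"
definition tau :: "mat2 \<Rightarrow> complex" where "tau X = mtr X ^ 2 / mdet X"
definition comm :: "mat2 \<Rightarrow> mat2 \<Rightarrow> mat2" where
  "comm X Y = mat2_mult (mat2_mult X Y) (mat2_mult (minv X) (minv Y))"
definition beta :: "mat2 \<Rightarrow> mat2 \<Rightarrow> complex" where "beta X Y = mtr (comm X Y) - 2"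

lemma mdet_mult: "mdet (mat2_mult X Y) = mdet X * mdet Y"
  by (cases X; cases Y) (simp add: algebra_simps)
lemma mult_smul_left: "mat2_mult (smul s X) Y = smul s (mat2_mult X Y)"
  by (cases X; cases Y) (simp add: algebra_simps)
lemma mult_smul_right: "mat2_mult X (smul s Y) = smul s (mat2_mult X Y)"
  by (cases X; cases Y) (simp add: algebra_simps)
lemma smul_smul: "smul s (smul t X) = smul (s*t) X"
  by (cases X) (simp add: algebra_simps)
lemma mtr_smul: "mtr (smul s X) = s * mtr X"
  by (cases X) (simp add: algebra_simps)
lemma mdet_smul: "mdet (smul s X) = s^2 * mdet X"
  by (cases X) (simp add: algebra_simps power2_eq_square)
lemma mdet_madj: "mdet (madj X) = mdet X"
  by (cases X) (simp add: algebra_simps)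
lemma mdet_minv: "mdet X \<noteq> 0 \<Longrightarrow> mdet (minv X) = 1 / mdet X"
  by (simp add: minv_def mdet_smul mdet_madj power2_eq_square)
lemma mult_madj: "mat2_mult X (madj X) = (mdet X, 0, 0, mdet X)"
  by (cases X) (simp add: algebra_simps)
lemma madj_mult: "mat2_mult (madj X) X = (mdet X, 0, 0, mdet X)"
  by (cases X) (simp add: algebra_simps)
lemma minv_right: "mdet X \<noteq> 0 \<Longrightarrow> mat2_mult X (minv X) = mat2_id"
  by (simp add: minv_def mult_smul_right mult_madj mat2_id_def)
lemma minv_left: "mdet X \<noteq> 0 \<Longrightarrow> mat2_mult (minv X) X = mat2_id"
  by (simp add: minv_def mult_smul_left madj_mult mat2_id_def)

lemma fricke_hom: "mtr (mat2_mult (mat2_mult X Y) (mat2_mult (madj X) (madj Y))) =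
   mtr X ^ 2 * mdet Y + mtr Y ^ 2 * mdet X + mtr (mat2_mult X Y) ^ 2
   - mtr X * mtr Y * mtr (mat2_mult X Y) - 2 * mdet X * mdet Y"
  by (cases X; cases Y) (simp add: algebra_simps power2_eq_square)

lemma mtr_comm: "mdet X \<noteq> 0 \<Longrightarrow> mdet Y \<noteq> 0 \<Longrightarrow> mtr (comm X Y) =
   (mtr X ^ 2 * mdet Y + mtr Y ^ 2 * mdet X + mtr (mat2_mult X Y) ^ 2
   - mtr X * mtr Y * mtr (mat2_mult X Y) - 2 * mdet X * mdet Y) / (mdet X * mdet Y)"
  unfolding comm_def minv_def fricke_hom[symmetric] mult_smul_left mult_smul_right smul_smul mtr_smul
  by simp

lemma tr_conj: "mtr (mat2_mult (mat2_mult B A) (madj B)) = mtr A * mdet B"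
  by (cases A; cases B) (simp add: algebra_simps)
lemma det_conj: "mdet (mat2_mult (mat2_mult B A) (madj B)) = mdet A * mdet B ^ 2"
  by (simp add: mdet_mult mdet_madj power2_eq_square)
lemma tr_A_conj: "mtr (mat2_mult A (mat2_mult (mat2_mult B A) (madj B))) =
   mtr B * mtr A * mtr (mat2_mult A B) - mdet A * mtr B ^ 2 - mtr (mat2_mult A B) ^ 2 + 2 * mdet A * mdet B"
  by (cases A; cases B) (simp add: algebra_simps power2_eq_square)

lemma jorg_scalar:
  fixes t d s e u :: complex
  assumes "d \<noteq> 0" "e \<noteq> 0"
  defines "bt \<equiv> (t^2 * e + s^2 * d + u^2 - t*s*u - 2*d*e) / (d*e) - 2"
  defines "v \<equiv> (s*t*u - d*s^2 - u^2 + 2*d*e) / e"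
  shows "(t^2 * d + t^2 * d + v^2 - t*t*v - 2*d*d) / (d*d) - 2 = bt * (bt - (t^2/d - 4))"
  using assms unfolding bt_def v_def
  by (simp add: field_simps power2_eq_square)

lemma jorg: "mdet A \<noteq> 0 \<Longrightarrow> mdet B \<noteq> 0 \<Longrightarrow>
  beta A (mat2_mult (mat2_mult B A) (minv B)) = beta A B * (beta A B - (tau A - 4))"
proof -
  assume dA: "mdet A \<noteq> 0" and dB: "mdet B \<noteq> 0"
  let ?B1 = "mat2_mult (mat2_mult B A) (minv B)"
  have B1: "?B1 = smul (1 / mdet B) (mat2_mult (mat2_mult B A) (madj B))"
    by (simp add: minv_def mult_smul_right)
  have t1: "mtr ?B1 = mtr A" using dB by (simp add: B1 mtr_smul tr_conj)
  have d1: "mdet ?B1 = mdet A" using dB by (simp add: B1 mdet_smul det_conj power2_eq_square)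
  have u1: "mtr (mat2_mult A ?B1) = (mtr B * mtr A * mtr (mat2_mult A B) - mdet A * mtr B ^ 2
      - mtr (mat2_mult A B) ^ 2 + 2 * mdet A * mdet B) / mdet B"
    by (simp add: B1 mult_smul_right mtr_smul tr_A_conj)
  have dB1: "mdet ?B1 \<noteq> 0" using d1 dA by simp
  show ?thesis
    unfolding beta_def mtr_comm[OF dA dB] mtr_comm[OF dA dB1] t1 d1 u1 tau_def
    using jorg_scalar[OF dA dB, of "mtr A" "mtr B" "mtr (mat2_mult A B)"]
    by (simp add: mult_ac)
qed

definition fgrp :: "mat2 set \<Rightarrow> bool" where
  "fgrp G \<longleftrightarrow> finite G \<and> (\<forall>X\<in>G. \<forall>Y\<in>G. mat2_mult X Y \<in> G) \<and> (\<forall>X\<in>G. mdet X \<noteq> 0)"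

lemma fgrp_pow_in: "fgrp G \<Longrightarrow> X \<in> G \<Longrightarrow> mat2_pow X (Suc k) \<in> G"
  by (induction k) (auto simp: fgrp_def)

lemma mdet_pow: "mdet (mat2_pow X k) = mdet X ^ k"
  by (induction k) (simp_all add: mdet_mult mat2_id_def)

lemma cancel_left: "mdet P \<noteq> 0 \<Longrightarrow> mat2_mult P Y = P \<Longrightarrow> Y = mat2_id"
proof -
  assume d: "mdet P \<noteq> 0" and e: "mat2_mult P Y = P"
  have "Y = mat2_mult (mat2_mult (minv P) P) Y" using minv_left[OF d] by simp
  also have "\<dots> = mat2_mult (minv P) P" by (simp add: mat2_mult_assoc e)
  also have "\<dots> = mat2_id" using minv_left[OF d] by simp
  finally show ?thesis .
qed

lemma fgrp_order: assumes "fgrp G" "X \<in> G" shows "\<exists>m>0. mat2_pow X m = mat2_id"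
proof -
  let ?f = "\<lambda>k. mat2_pow X (Suc k)"
  have "range ?f \<subseteq> G" using fgrp_pow_in[OF assms] by auto
  hence "finite (range ?f)" using assms(1) unfolding fgrp_def by (meson finite_subset)
  hence "\<not> inj ?f" using finite_imageD by blast
  then obtain i j where ij: "i < j" "?f i = ?f j"
    unfolding inj_def by (metis linorder_neqE_nat)
  have "?f j = mat2_mult (?f i) (mat2_pow X (j - i))"
    using ij(1) mat2_pow_add[of X "Suc i" "j - i"] by simp
  hence "mat2_mult (?f i) (mat2_pow X (j - i)) = ?f i" using ij by simp
  moreover have "mdet (?f i) \<noteq> 0" using fgrp_pow_in[OF assms] assms(1) unfolding fgrp_def by blast
  ultimately have "mat2_pow X (j - i) = mat2_id" using cancel_left by blast
  thus ?thesis using ij(1) by (intro exI[of _ "j - i"]) simp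
qed

lemma inv_unique: "mdet X \<noteq> 0 \<Longrightarrow> mat2_mult X Y = mat2_id \<Longrightarrow> Y = minv X"
proof -
  assume d: "mdet X \<noteq> 0" and e: "mat2_mult X Y = mat2_id"
  have "minv X = mat2_mult (minv X) (mat2_mult X Y)" using e by simp
  also have "\<dots> = Y" by (simp add: mat2_mult_assoc[symmetric] minv_left[OF d])
  finally show ?thesis by simp
qed

lemma fgrp_inv: assumes "fgrp G" "X \<in> G" shows "minv X \<in> G"
proof -
  obtain m where m: "m > 0" "mat2_pow X m = mat2_id" using fgrp_order[OF assms] by blast
  have d: "mdet X \<noteq> 0" using assms unfolding fgrp_def by blast
  show ?thesis
  proof (cases "m = 1")
    case True
    hence "X = mat2_id" using m by simp
    hence "minv X = X" by (simp add: minv_def mat2_id_def)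
    thus ?thesis using assms(2) by simp
  next
    case False
    then obtain k where k: "m = Suc (Suc k)" using m(1) by (cases m; cases "m - 1") auto
    have "mat2_mult X (mat2_pow X (Suc k)) = mat2_id" using m(2) k by simp
    hence "mat2_pow X (Suc k) = minv X" using inv_unique[OF d] by blast
    thus ?thesis using fgrp_pow_in[OF assms, of k] by simp
  qed
qed

fun mvec :: "mat2 \<Rightarrow> complex \<times> complex \<Rightarrow> complex \<times> complex" where
  "mvec (a,b,c,d) (x,y) = (a*x+b*y, c*x+d*y)"

lemma mvec_mult: "mvec (mat2_mult A B) v = mvec A (mvec B v)"
  by (cases A; cases B; cases v) (simp add: algebra_simps)

lemma mvec_id: "mvec mat2_id v = v"
  by (cases v) (simp add: mat2_id_def)

lemma mvec_pow: "mvec X v = (l * fst v, l * snd v) \<Longrightarrow> mvec (mat2_pow X m) v = (l^m * fst v, l^m * snd v)"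
proof (induction m)
  case 0 thus ?case by (cases v) (simp add: mvec_id)
next
  case (Suc m)
  have "mvec (mat2_pow X (Suc m)) v = mvec X (l^m * fst v, l^m * snd v)"
    using Suc by (simp add: mvec_mult)
  also have "\<dots> = (l^m * fst (mvec X v), l^m * snd (mvec X v))"
    by (cases X; cases v) (simp add: algebra_simps)
  also have "\<dots> = (l^Suc m * fst v, l^Suc m * snd v)" using Suc.prems by simp
  finally show ?case .
qed

lemma eigvec:
  fixes a b c d l :: complex
  assumes "(a - l) * (d - l) = b * c"
  shows "\<exists>x y. (x, y) \<noteq> (0, 0) \<and> mvec (a,b,c,d) (x,y) = (l * x, l * y)"
proof (cases "b = 0")
  case False
  show ?thesis
    apply (rule exI[of _ b], rule exI[of _ "l - a"])
    using False assms by (simp add: algebra_simps)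
next
  case b: True
  show ?thesis
  proof (cases "c = 0")
    case False
    show ?thesis
      apply (rule exI[of _ "l - d"], rule exI[of _ c])
      using False b assms by (simp add: algebra_simps) (algebra)?
  next
    case True
    with b assms have "a = l \<or> d = l" by simp
    thus ?thesis
    proof
      assume "a = l" thus ?thesis using b True by (intro exI[of _ 1] exI[of _ 0]) simp
    next
      assume "d = l" thus ?thesis using b True by (intro exI[of _ 0] exI[of _ 1]) simp
    qed
  qed
qed

lemma norm_one_of_pow: "(l::complex) ^ m = 1 \<Longrightarrow> m > 0 \<Longrightarrow> norm l = 1"
  using power_eq_1_iff[of l m] by auto

lemma eig_pow1:
  assumes "mat2_pow X m = mat2_id" "X = (a,b,c,d)" "(a - l) * (d - l) = b * c"
  shows "l ^ m = 1"
proof -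
  obtain x y where v: "(x,y) \<noteq> (0,0)" "mvec (a,b,c,d) (x,y) = (l*x, l*y)"
    using eigvec[OF assms(3)] by blast
  have "mvec (mat2_pow X m) (x,y) = (l^m * x, l^m * y)"
    using mvec_pow[of X "(x,y)" l m] v assms(2) by simp
  hence "(x, y) = (l^m * x, l^m * y)" using assms(1) by (simp add: mvec_id)
  hence "(l^m - 1) * x = 0" "(l^m - 1) * y = 0" by (simp_all add: algebra_simps)
  thus ?thesis using v(1) by auto
qed

lemma finite_order_tau:
  assumes "mat2_pow X m = mat2_id" "m > 0" "mdet X \<noteq> 0"
  shows "\<exists>r. tau X = complex_of_real r \<and> 0 \<le> r \<and> r \<le> 4"
proof -
  obtain a b c d where X: "X = (a,b,c,d)" by (cases X) auto
  define t where "t = a + d"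
  define s where "s = csqrt (t^2 - 4*(a*d - b*c))"
  have s2: "s^2 = t^2 - 4*(a*d-b*c)" unfolding s_def by simp
  define l1 where "l1 = (t + s)/2"
  define l2 where "l2 = (t - s)/2"
  have sum: "l1 + l2 = t" unfolding l1_def l2_def by (simp add: field_simps)
  have prod: "l1 * l2 = a*d - b*c" unfolding l1_def l2_def
    using s2 by (simp add: field_simps power2_eq_square)
  have e1: "(a - l1) * (d - l1) = b * c"
    using sum prod unfolding t_def by algebra
  have e2: "(a - l2) * (d - l2) = b * c"
    using sum prod unfolding t_def by algebra
  have p1: "l1 ^ m = 1" using eig_pow1[OF assms(1) X e1] .
  have p2: "l2 ^ m = 1" using eig_pow1[OF assms(1) X e2] .
  have n1: "norm l1 = 1" using norm_one_of_pow[OF p1 assms(2)] .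
  have n2: "norm l2 = 1" using norm_one_of_pow[OF p2 assms(2)] .
  define mu where "mu = l1 * cnj l2"
  have nmu: "norm mu = 1" unfolding mu_def by (simp add: norm_mult n1 n2)
  have i1: "l1 * cnj l1 = 1" using n1 by (metis complex_norm_square mult.commute of_real_1 power_one)
  have i2: "l2 * cnj l2 = 1" using n2 by (metis complex_norm_square mult.commute of_real_1 power_one)
  have l1nz: "l1 \<noteq> 0" using n1 by auto
  have l2nz: "l2 \<noteq> 0" using n2 by auto
  have "tau X = (l1 + l2)^2 / (l1 * l2)" using X sum prod unfolding tau_def t_def by simp
  also have "\<dots> = l1 / l2 + l2 / l1 + 2" using l1nz l2nz by (simp add: field_simps power2_eq_square)
  also have "l1 / l2 = mu" unfolding mu_def using i2 l2nz by (simp add: field_simps)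
  also have "l2 / l1 = cnj mu" unfolding mu_def using i1 l1nz by (simp add: field_simps)
  also have "mu + cnj mu + 2 = complex_of_real (2 * Re mu + 2)" by (simp add: complex_add_cnj)
  finally have tx: "tau X = complex_of_real (2 * Re mu + 2)" .
  have "\<bar>Re mu\<bar> \<le> 1" using abs_Re_le_cmod[of mu] nmu by simp
  hence b1: "-1 \<le> Re mu" "Re mu \<le> 1" by (simp_all add: abs_le_iff)
  show ?thesis
  proof (intro exI conjI)
    show "tau X = complex_of_real (2 * Re mu + 2)" by (rule tx)
    show "0 \<le> 2 * Re mu + 2" using b1 by linarith
    show "2 * Re mu + 2 \<le> 4" using b1 by linarith
  qed
qed

lemma real_of_sq:
  assumes "(z::complex)^2 = complex_of_real r" "r \<ge> 0"
  shows "z = complex_of_real (Re z)"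
proof -
  have h1: "Re z * Re z - Im z * Im z = r"
    using arg_cong[OF assms(1), of Re] by (simp add: power2_eq_square)
  have h2: "Re z * Im z + Im z * Re z = 0"
    using arg_cong[OF assms(1), of Im] by (simp add: power2_eq_square)
  have "Im z = 0"
  proof (rule ccontr)
    assume h: "Im z \<noteq> 0"
    hence "Re z = 0" using h2 by simp
    hence "- (Im z * Im z) = r" using h1 by simp
    moreover have "Im z * Im z > 0" using h not_real_square_gt_zero by blast
    ultimately show False using assms(2) by linarith
  qed
  thus ?thesis by (simp add: complex_eq_iff)
qed

lemma fgrp_mult: "fgrp G \<Longrightarrow> X \<in> G \<Longrightarrow> Y \<in> G \<Longrightarrow> mat2_mult X Y \<in> G"
  by (simp add: fgrp_def)
lemma fgrp_det: "fgrp G \<Longrightarrow> X \<in> G \<Longrightarrow> mdet X \<noteq> 0"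
  by (simp add: fgrp_def)

lemma fgrp_comm_in: "fgrp G \<Longrightarrow> X \<in> G \<Longrightarrow> Y \<in> G \<Longrightarrow> comm X Y \<in> G"
  unfolding comm_def by (intro fgrp_mult fgrp_inv) auto

lemma mdet_comm: "mdet X \<noteq> 0 \<Longrightarrow> mdet Y \<noteq> 0 \<Longrightarrow> mdet (comm X Y) = 1"
  unfolding comm_def by (simp add: mdet_mult mdet_minv)

lemma tau_real: assumes "fgrp G" "X \<in> G" shows "\<exists>r. tau X = complex_of_real r \<and> 0 \<le> r \<and> r \<le> 4"
proof -
  obtain m where "m > 0" "mat2_pow X m = mat2_id" using fgrp_order[OF assms] by blast
  thus ?thesis using finite_order_tau fgrp_det[OF assms] by blast
qed

lemma beta_real: assumes G: "fgrp G" and X: "X \<in> G" and Y: "Y \<in> G"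
  shows "\<exists>r. beta X Y = complex_of_real r \<and> -4 \<le> r \<and> r \<le> 0"
proof -
  let ?K = "comm X Y"
  have K: "?K \<in> G" using fgrp_comm_in[OF G X Y] .
  have dK: "mdet ?K = 1" using mdet_comm fgrp_det[OF G X] fgrp_det[OF G Y] by blast
  obtain r where r: "tau ?K = complex_of_real r" "0 \<le> r" "r \<le> 4" using tau_real[OF G K] by blast
  have sq: "mtr ?K ^ 2 = complex_of_real r" using r dK by (simp add: tau_def)
  define t where "t = Re (mtr ?K)"
  have tK: "mtr ?K = complex_of_real t" using real_of_sq[OF sq r(2)] t_def by simp
  have "t^2 = r" using sq tK by (metis of_real_eq_iff of_real_power)
  hence "t^2 \<le> 2^2" using r by simp
  hence "\<bar>t\<bar> \<le> 2" using power2_le_iff_abs_le by (metis zero_le_numeral)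
  hence "-4 \<le> t - 2" "t - 2 \<le> 0" by (simp_all add: abs_le_iff)
  moreover have "beta X Y = complex_of_real (t - 2)" unfolding beta_def using tK by simp
  ultimately show ?thesis by blast
qed

lemma fricke_bound:
  assumes G: "fgrp G" and A: "A \<in> G" and B: "B \<in> G"
    and tA: "tau A = complex_of_real (4 + c)" and tB: "tau B = complex_of_real (4 + c)"
  shows "Re (beta A B) \<ge> - (c^2) / 4"
proof -
  have dA: "mdet A \<noteq> 0" using fgrp_det[OF G A] .
  have dB: "mdet B \<noteq> 0" using fgrp_det[OF G B] .
  have AB: "mat2_mult A B \<in> G" using fgrp_mult[OF G A B] .
  define a where "a = csqrt (mdet A)"
  define b where "b = csqrt (mdet B)"
  have a2: "a^2 = mdet A" unfolding a_def by simp
  have b2: "b^2 = mdet B" unfolding b_def by simp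
  have anz: "a \<noteq> 0" using a2 dA by auto
  have bnz: "b \<noteq> 0" using b2 dB by auto
  define x where "x = mtr A / a"
  define y where "y = mtr B / b"
  define z where "z = mtr (mat2_mult A B) / (a * b)"
  have x2: "x^2 = tau A" unfolding x_def tau_def using a2 by (simp add: power_divide)
  have y2: "y^2 = tau B" unfolding y_def tau_def using b2 by (simp add: power_divide)
  have z2: "z^2 = tau (mat2_mult A B)" unfolding z_def tau_def using a2 b2
    by (simp add: power_divide mdet_mult power_mult_distrib)
  obtain rz where rz: "tau (mat2_mult A B) = complex_of_real rz" "0 \<le> rz" using tau_real[OF G AB] by blast
  have c4: "0 \<le> 4 + c" using tau_real[OF G A] tA by (metis of_real_eq_iff)
  have xr: "x = complex_of_real (Re x)" using real_of_sq[of x "4 + c"] x2 tA c4 by simp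
  have yr: "y = complex_of_real (Re y)" using real_of_sq[of y "4 + c"] y2 tB c4 by simp
  have zr: "z = complex_of_real (Re z)" using real_of_sq[of z rz] z2 rz by simp
  have trA: "mtr A = x * a" unfolding x_def using anz by simp
  have trB: "mtr B = y * b" unfolding y_def using bnz by simp
  have trAB: "mtr (mat2_mult A B) = z * (a * b)" unfolding z_def using anz bnz by simp
  have "mtr (comm A B) = x^2 + y^2 + z^2 - x*y*z - 2"
    unfolding mtr_comm[OF dA dB] trA trB trAB a2[symmetric] b2[symmetric]
    using anz bnz by (simp add: field_simps power2_eq_square)
  hence bt: "beta A B = x^2 + y^2 + z^2 - x*y*z - 4" unfolding beta_def by simp
  obtain X where xX: "x = complex_of_real X" using xr by blast
  obtain Y where yY: "y = complex_of_real Y" using yr by blast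
  obtain Z where zZ: "z = complex_of_real Z" using zr by blast
  have X2: "X^2 = 4 + c" using x2 tA xX by (metis of_real_eq_iff of_real_power)
  have Y2: "Y^2 = 4 + c" using y2 tB yY by (metis of_real_eq_iff of_real_power)
  have "beta A B = complex_of_real (X^2 + Y^2 + Z^2 - X*Y*Z - 4)"
    unfolding bt xX yY zZ by simp
  hence rb: "Re (beta A B) = X^2 + Y^2 + Z^2 - X*Y*Z - 4" by simp
  have id: "X^2 + Y^2 + Z^2 - X*Y*Z - 4 = (Z - X*Y/2)^2 - (4 - X^2)*(4 - Y^2)/4"
    by (simp add: field_simps power2_eq_square)
  have "(4 - X^2)*(4 - Y^2)/4 = c^2/4" using X2 Y2 by (simp add: power2_eq_square)
  moreover have "(Z - X*Y/2)^2 \<ge> 0" by simp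
  ultimately show ?thesis using rb id by linarith
qed

fun conjseq :: "mat2 \<Rightarrow> mat2 \<Rightarrow> nat \<Rightarrow> mat2" where
  "conjseq A B 0 = B"
| "conjseq A B (Suc k) = mat2_mult (mat2_mult (conjseq A B k) A) (minv (conjseq A B k))"

lemma core:
  assumes G: "fgrp G" and A: "A \<in> G" and B: "B \<in> G"
    and tA: "tau A = complex_of_real (4 + c)" and tB: "tau B = complex_of_real (4 + c)"
    and c1: "-1 < c" and c2: "c < 0" and nz: "beta A B \<noteq> 0"
  shows False
proof -
  have inG: "conjseq A B k \<in> G" for k
    by (induction k) (auto intro: fgrp_mult fgrp_inv G A B)
  obtain r0 where r0: "beta A B = complex_of_real r0" "r0 \<le> 0" using beta_real[OF G A B] by blast
  have lb: "- (c^2)/4 \<le> r0" using fricke_bound[OF G A B tA tB] r0 by simp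
  have neg: "r0 < 0" using r0 nz by (cases "r0 = 0") auto
  have "c * (c + 4) < 0" using mult_neg_pos[of c "c+4"] c1 c2 by simp
  hence "c*c + 4*c < 0" by (simp add: algebra_simps)
  hence cb: "c < - (c^2)/4" unfolding power2_eq_square by linarith
  define g where "g k = Re (beta A (conjseq A B k))" for k
  have main: "beta A (conjseq A B k) = complex_of_real (g k) \<and> r0 \<le> g k \<and> g k < 0
     \<and> g (Suc k) = g k * (g k - c)" for k
  proof (induction k)
    case 0
    have "beta A (conjseq A B (Suc 0)) = beta A B * (beta A B - (tau A - 4))"
      unfolding conjseq.simps(2)[of A B 0] conjseq.simps(1)
      by (rule jorg[OF fgrp_det[OF G A] fgrp_det[OF G B]])
    hence "g (Suc 0) = r0 * (r0 - c)" unfolding g_def using r0 tA by simp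
    thus ?case using r0 neg unfolding g_def by simp
  next
    case (Suc k)
    have bk0: "beta A (conjseq A B k) = complex_of_real (g k)" using Suc.IH by blast
    have "beta A (conjseq A B (Suc k)) = beta A (conjseq A B k) * (beta A (conjseq A B k) - (tau A - 4))"
      unfolding conjseq.simps(2)[of A B k]
      by (rule jorg[OF fgrp_det[OF G A] fgrp_det[OF G inG[of k]]])
    also have "\<dots> = complex_of_real (g k) * (complex_of_real (g k) - (complex_of_real (4 + c) - 4))"
      by (simp only: bk0 tA)
    also have "\<dots> = complex_of_real (g k * (g k - c))" by simp
    also have "\<dots> = complex_of_real (g (Suc k))" using Suc.IH by simp
    finally have bk: "beta A (conjseq A B (Suc k)) = complex_of_real (g (Suc k))" .
    have f1: "g k - c > 0" using Suc.IH lb cb by linarith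
    have f2: "g k - c < 1" using Suc.IH c1 by linarith
    have gk: "g k < 0" using Suc.IH by simp
    have "g k * 1 < g k * (g k - c)" using mult_strict_left_mono_neg[OF f2 gk] by simp
    hence inc: "g k < g (Suc k)" using Suc.IH by simp
    have neg2: "g (Suc k) < 0" using Suc.IH f1 gk by (simp add: mult_neg_pos)
    have "beta A (conjseq A B (Suc (Suc k))) = beta A (conjseq A B (Suc k)) * (beta A (conjseq A B (Suc k)) - (tau A - 4))"
      unfolding conjseq.simps(2)[of A B "Suc k"]
      by (rule jorg[OF fgrp_det[OF G A] fgrp_det[OF G inG[of "Suc k"]]])
    also have "\<dots> = complex_of_real (g (Suc k)) * (complex_of_real (g (Suc k)) - (complex_of_real (4 + c) - 4))"
      by (simp only: bk tA)
    also have "\<dots> = complex_of_real (g (Suc k) * (g (Suc k) - c))" by simp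
    finally have last: "g (Suc (Suc k)) = g (Suc k) * (g (Suc k) - c)" unfolding g_def[of "Suc (Suc k)"] by simp
    have r0k: "r0 \<le> g k" using Suc.IH by blast
    show ?case
    proof (intro conjI)
      show "beta A (conjseq A B (Suc k)) = complex_of_real (g (Suc k))" by (rule bk)
      show "r0 \<le> g (Suc k)" using r0k inc by linarith
      show "g (Suc k) < 0" by (rule neg2)
      show "g (Suc (Suc k)) = g (Suc k) * (g (Suc k) - c)" by (rule last)
    qed
  qed
  have "g k < g (Suc k)" for k
  proof -
    have f1: "g k - c > 0" using main[of k] lb cb by linarith
    have f2: "g k - c < 1" using main[of k] c1 by linarith
    have gk: "g k < 0" using main[of k] by simp
    have "g k * 1 < g k * (g k - c)" using mult_strict_left_mono_neg[OF f2 gk] by simp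
    thus ?thesis using main[of k] by simp
  qed
  hence "strict_mono g" by (simp add: strict_mono_Suc_iff)
  hence "inj g" by (rule strict_mono_imp_inj_on)
  hence inf: "infinite (range g)" using finite_imageD by blast
  have "range g \<subseteq> (\<lambda>X. Re (beta A X)) ` G" unfolding g_def using inG by auto
  moreover have "finite G" using G by (simp add: fgrp_def)
  ultimately show False using inf finite_subset by blast
qed

lemma parabolic_pow:
  assumes "K = (a,b,c,d)" "a + d = 2" "a*d - b*c = 1"
  shows "mat2_pow K m = (of_nat m * a - (of_nat m - 1), of_nat m * b, of_nat m * c, of_nat m * d - (of_nat m - 1))"
proof (induction m)
  case 0 thus ?case by (simp add: mat2_id_def)
next
  case (Suc m)
  define M where "M = (of_nat m :: complex)"
  have dd: "d = 2 - a" using assms(2) by (simp add: algebra_simps)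
  have q1: "a*a + b*c = 2*a - 1" using assms(3) unfolding dd by (simp add: algebra_simps)
  have q2: "b*c + d*d = 2*d - 1" using assms(3) unfolding dd by (simp add: algebra_simps)
  have "mat2_pow K (Suc m) = mat2_mult K (mat2_pow K m)" by simp
  also have "\<dots> = mat2_mult (a,b,c,d) (M * a - (M - 1), M * b, M * c, M * d - (M - 1))"
    using Suc.IH assms(1) unfolding M_def by simp
  also have "\<dots> = (M*(a*a+b*c) - (M-1)*a, M*b*(a+d) - (M-1)*b, M*c*(a+d) - (M-1)*c, M*(b*c+d*d) - (M-1)*d)"
    by (simp add: algebra_simps)
  also have "\<dots> = ((M+1) * a - M, (M+1) * b, (M+1) * c, (M+1) * d - M)"
    unfolding q1 q2 assms(2) by (simp add: algebra_simps)
  finally show ?case unfolding M_def by (simp add: algebra_simps)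
qed

lemma parabolic:
  assumes G: "fgrp G" and K: "K \<in> G" and d: "mdet K = 1" and t: "mtr K = 2" and ne: "K \<noteq> mat2_id"
  shows False
proof -
  obtain a b c e where Ke: "K = (a,b,c,e)" by (cases K) auto
  obtain m where m: "m > 0" "mat2_pow K m = mat2_id" using fgrp_order[OF G K] by blast
  have p: "mat2_pow K m = (of_nat m * a - (of_nat m - 1), of_nat m * b, of_nat m * c, of_nat m * e - (of_nat m - 1))"
    using parabolic_pow[OF Ke] d t Ke by simp
  have mnz: "(of_nat m :: complex) \<noteq> 0" using m by simp
  have eqs: "of_nat m * a - (of_nat m - 1) = 1" "of_nat m * b = 0" "of_nat m * c = 0" "of_nat m * e - (of_nat m - 1) = 1"
    using m(2) p by (simp_all add: mat2_id_def)
  have "b = 0" "c = 0" using eqs mnz by simp_all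
  moreover have "of_nat m * (a - 1) = 0" "of_nat m * (e - 1) = 0" using eqs by (simp_all add: algebra_simps)
  hence "a = 1" "e = 1" using mnz by simp_all
  ultimately show False using ne Ke by (simp add: mat2_id_def)
qed

definition valid :: "int list \<Rightarrow> bool" where "valid cs \<longleftrightarrow> (\<forall>c\<in>set cs. c \<ge> 2)"

lemma ncf_gt1: "cs \<noteq> [] \<Longrightarrow> valid cs \<Longrightarrow> ncf cs > 1"
proof (induction cs rule: ncf.induct)
  case 1 thus ?case by simp
next
  case (2 c) thus ?case by (simp add: valid_def)
next
  case (3 c d cs)
  have t: "ncf (d # cs) > 1" using 3 by (simp add: valid_def)
  hence "1 / ncf (d # cs) < 1" by simp
  moreover have "c \<ge> 2" using "3.prems" by (simp add: valid_def)
  ultimately show ?case by simp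
qed

lemma ncf_bounds: "valid (c # d # cs) \<Longrightarrow> of_int c - 1 < ncf (c # d # cs) \<and> ncf (c # d # cs) < of_int c"
proof -
  assume v: "valid (c # d # cs)"
  have t: "ncf (d # cs) > 1" using ncf_gt1[of "d # cs"] v by (simp add: valid_def)
  hence "0 < 1 / ncf (d # cs)" "1 / ncf (d # cs) < 1" by simp_all
  thus ?thesis by simp
qed

lemma int_between: "of_int d - 1 < (of_int c :: rat) \<Longrightarrow> of_int c < (of_int d :: rat) \<Longrightarrow> False"
proof -
  assume a: "of_int d - 1 < (of_int c :: rat)" "of_int c < (of_int d :: rat)"
  hence "of_int (d - 1) < (of_int c :: rat)" by simp
  hence "d - 1 < c" by (simp only: of_int_less_iff)
  moreover have "c < d" using a(2) by (simp only: of_int_less_iff)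
  ultimately show False by linarith
qed

lemma ncf_inj: "cs \<noteq> [] \<Longrightarrow> ds \<noteq> [] \<Longrightarrow> valid cs \<Longrightarrow> valid ds \<Longrightarrow> ncf cs = ncf ds \<Longrightarrow> cs = ds"
proof (induction cs arbitrary: ds rule: ncf.induct)
  case 1 thus ?case by simp
next
  case (2 c)
  show ?case
  proof (cases ds rule: ncf.cases)
    case 1 thus ?thesis using 2 by simp
  next
    case (2 d) thus ?thesis using "2.prems" by simp
  next
    case (3 d d' ds')
    have vd: "valid (d # d' # ds')" using "2.prems" 3 by simp
    have "of_int d - 1 < ncf ds \<and> ncf ds < of_int d" using ncf_bounds[OF vd] 3 by simp
    hence "of_int d - 1 < (of_int c :: rat)" "(of_int c :: rat) < of_int d" using "2.prems" by simp_all
    thus ?thesis using int_between by blast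
  qed
next
  case (3 c c' cs)
  have bc: "of_int c - 1 < ncf (c # c' # cs) \<and> ncf (c # c' # cs) < of_int c" using ncf_bounds "3.prems" by blast
  show ?case
  proof (cases ds rule: ncf.cases)
    case 1 thus ?thesis using 3 by simp
  next
    case (2 d)
    hence "of_int c - 1 < (of_int d :: rat)" "(of_int d :: rat) < of_int c" using "3.prems" bc by simp_all
    thus ?thesis using int_between by blast
  next
    case (3 d d' ds')
    have vd: "valid (d # d' # ds')" using "3.prems" 3 by simp
    have bd: "of_int d - 1 < ncf ds \<and> ncf ds < of_int d" using ncf_bounds[OF vd] 3 by simp
    have "c = d"
    proof (rule ccontr)
      assume "c \<noteq> d"
      hence "c < d \<or> d < c" by linarith
      thus False
      proof
        assume "c < d" hence "c \<le> d - 1" by simp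
        hence "(of_int c :: rat) \<le> of_int d - 1" by (metis of_int_diff of_int_le_iff of_int_1)
        thus False using bc bd "3.prems" by simp
      next
        assume "d < c" hence "d \<le> c - 1" by simp
        hence "(of_int d :: rat) \<le> of_int c - 1" by (metis of_int_diff of_int_le_iff of_int_1)
        thus False using bc bd "3.prems" by simp
      qed
    qed
    hence "1 / ncf (c' # cs) = 1 / ncf (d' # ds')" using "3.prems" 3 by simp
    hence eqn: "ncf (c' # cs) = ncf (d' # ds')" by simp
    have v1: "valid (c' # cs)" using "3.prems" by (simp add: valid_def)
    have v2: "valid (d' # ds')" using "3.prems" 3 by (simp add: valid_def)
    have "c' # cs = d' # ds'"
      apply (rule "3.IH")
      using v1 v2 eqn by auto
    thus ?thesis using \<open>c = d\<close> 3 by simp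
  qed
qed

lemma ncf_expansion_eq: "cs \<noteq> [] \<Longrightarrow> valid cs \<Longrightarrow> ncf_expansion (ncf cs) = cs"
  unfolding ncf_expansion_def
  by (rule the_equality) (auto simp: valid_def intro: ncf_inj)

definition qint :: "complex \<Rightarrow> nat \<Rightarrow> complex" where "qint q k = (\<Sum>i<k. q ^ i)"

lemma Rpow: "mat2_pow (Rq q) k = (q ^ k, qint q k, 0, 1)"
proof (induction k)
  case 0 thus ?case by (simp add: mat2_id_def qint_def)
next
  case (Suc k)
  have "qint q (Suc k) = 1 + q * qint q k"
    unfolding qint_def by (subst sum.lessThan_Suc_shift) (simp add: sum_distrib_left)
  thus ?case using Suc by (simp add: Rq_def algebra_simps)
qed

lemma Mq_append: "Mq q (cs @ ds) = mat2_mult (Mq q cs) (Mq q ds)"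
  by (induction cs) (simp_all add: mat2_mult_assoc)

lemma mdet_Mq: "q \<noteq> 0 \<Longrightarrow> mdet (Mq q cs) \<noteq> 0"
  by (induction cs) (simp_all add: mdet_mult Rpow Sq_def mat2_id_def)

definition e11 :: "mat2 \<Rightarrow> complex" where "e11 X = fst X"
definition e12 :: "mat2 \<Rightarrow> complex" where "e12 X = fst (snd X)"
definition e21 :: "mat2 \<Rightarrow> complex" where "e21 X = fst (snd (snd X))"
definition e22 :: "mat2 \<Rightarrow> complex" where "e22 X = snd (snd (snd X))"

lemma Spoly_valid: "cs \<noteq> [] \<Longrightarrow> valid cs \<Longrightarrow> Spoly (ncf cs) q = e21 (Mq q cs)"
  by (simp add: Spoly_def ncf_expansion_eq e21_def)

lemma e21_cons: "e21 (Mq q (c # cs)) = e11 (Mq q cs)"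
  by (cases "Mq q cs") (simp add: Rpow Sq_def e21_def e11_def)

lemma R2: "mat2_pow (Rq q) 2 = (q^2, 1 + q, 0, 1)"
  by (simp add: numeral_2_eq_2 Rq_def mat2_id_def power2_eq_square)

lemma e11_cons2: "q \<noteq> 0 \<Longrightarrow> e11 (Mq q (2 # cs)) = (1 + q) * e11 (Mq q cs) - q * e21 (Mq q cs)"
  by (cases "Mq q cs") (simp add: R2 Sq_def e21_def e11_def field_simps power2_eq_square)

lemma qint_n: "q ^ n = 1 \<Longrightarrow> q \<noteq> 1 \<Longrightarrow> qint q n = 0"
  unfolding qint_def by (simp add: sum_gp_strict)

lemma Mq_n: "q ^ n = 1 \<Longrightarrow> q \<noteq> 1 \<Longrightarrow> Mq q [int n] = Sq q"
  by (cases "Sq q") (simp add: Rpow qint_n mat2_id_def Sq_def)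

lemma G_finite:
  assumes q: "q \<noteq> 0" "q ^ n = 1" "q \<noteq> 1" "n \<ge> 2" and V: "finite {Spoly x q | x. x > 1}"
  shows "finite (Mq q ` {cs. valid cs})"
proof -
  define W where "W = {Spoly x q | x. x > 1} \<union> {0, 1}"
  have fW: "finite W" using V unfolding W_def by simp
  have e21W: "e21 (Mq q cs) \<in> W" if "valid cs" for cs
  proof (cases "cs = []")
    case True thus ?thesis by (simp add: W_def e21_def mat2_id_def)
  next
    case False
    hence "e21 (Mq q cs) = Spoly (ncf cs) q" using Spoly_valid that by simp
    moreover have "ncf cs > 1" using ncf_gt1 False that by simp
    ultimately show ?thesis unfolding W_def by blast
  qed
  have e11W: "e11 (Mq q cs) \<in> W" if "valid cs" for cs
    using e21W[of "2 # cs"] that e21_cons[of q 2 cs] by (simp add: valid_def)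
  have vn: "valid (cs @ [int n])" if "valid cs" for cs using that q(4) by (simp add: valid_def)
  have MS: "Mq q (cs @ [int n]) = mat2_mult (Mq q cs) (Sq q)" for cs
    by (simp only: Mq_append Mq_n[OF q(2) q(3)])
  have e22W: "e22 (Mq q cs) \<in> W" if "valid cs" for cs
  proof -
    have "e21 (Mq q (cs @ [int n])) = e22 (Mq q cs)"
      unfolding MS by (cases "Mq q cs") (simp add: Sq_def e21_def e22_def)
    thus ?thesis using e21W[OF vn[OF that]] by simp
  qed
  have e12W: "e12 (Mq q cs) \<in> W" if "valid cs" for cs
  proof -
    have "e11 (Mq q (cs @ [int n])) = e12 (Mq q cs)"
      unfolding MS by (cases "Mq q cs") (simp add: Sq_def e11_def e12_def)
    thus ?thesis using e11W[OF vn[OF that]] by simp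
  qed
  have "Mq q ` {cs. valid cs} \<subseteq> W \<times> W \<times> W \<times> W"
  proof
    fix X assume "X \<in> Mq q ` {cs. valid cs}"
    then obtain cs where cs: "valid cs" "X = Mq q cs" by blast
    obtain a b c d where X: "Mq q cs = (a,b,c,d)" by (cases "Mq q cs") auto
    show "X \<in> W \<times> W \<times> W \<times> W"
      using e11W[OF cs(1)] e12W[OF cs(1)] e21W[OF cs(1)] e22W[OF cs(1)] X unfolding cs(2)
      by (simp add: e11_def e12_def e21_def e22_def)
  qed
  thus ?thesis using fW finite_subset by (metis finite_cartesian_product)
qed

lemma G_fgrp:
  assumes q: "q \<noteq> 0" "q ^ n = 1" "q \<noteq> 1" "n \<ge> 2" and V: "finite {Spoly x q | x. x > 1}"
  shows "fgrp (Mq q ` {cs. valid cs})"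
  unfolding fgrp_def
proof (intro conjI ballI)
  show "finite (Mq q ` {cs. valid cs})" using G_finite[OF assms] .
next
  fix X Y assume "X \<in> Mq q ` {cs. valid cs}" "Y \<in> Mq q ` {cs. valid cs}"
  then obtain cs ds where "valid cs" "valid ds" "X = Mq q cs" "Y = Mq q ds" by blast
  thus "mat2_mult X Y \<in> Mq q ` {cs. valid cs}"
    by (intro image_eqI[of _ _ "cs @ ds"]) (auto simp: Mq_append valid_def)
next
  fix X assume "X \<in> Mq q ` {cs. valid cs}"
  thus "mdet X \<noteq> 0" using mdet_Mq[OF q(1)] by blast
qed

lemma family: "q \<noteq> 0 \<Longrightarrow> e11 (Mq q (replicate k 2)) = qint q (Suc k) \<and> e21 (Mq q (replicate k 2)) = qint q k"
proof (induction k)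
  case 0 thus ?case by (simp add: mat2_id_def e11_def e21_def qint_def)
next
  case (Suc k)
  have "e11 (Mq q (replicate (Suc k) 2)) = (1 + q) * qint q (Suc k) - q * qint q k"
    using e11_cons2[OF Suc.prems, of "replicate k 2"] Suc by simp
  also have "\<dots> = qint q (Suc (Suc k))" unfolding qint_def by (simp add: algebra_simps)
  finally show ?case using e21_cons[of q 2 "replicate k 2"] Suc by simp
qed

lemma family_S: "q \<noteq> 0 \<Longrightarrow> k \<ge> 1 \<Longrightarrow> qint q k \<in> {Spoly x q | x. x > 1}"
proof -
  assume q: "q \<noteq> 0" and k: "k \<ge> 1"
  have ne: "replicate k (2::int) \<noteq> []" using k by simp
  have v: "valid (replicate k 2)" by (simp add: valid_def)
  have "Spoly (ncf (replicate k 2)) q = qint q k" using Spoly_valid[OF ne v] family[OF q] by simp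
  moreover have "ncf (replicate k 2) > 1" using ncf_gt1[OF ne v] .
  ultimately show ?thesis unfolding mem_Collect_eq by (intro exI[of _ "ncf (replicate k 2)"]) simp
qed

lemma qint_inj:
  assumes "q = 1 \<or> (\<forall>m>0. q ^ m \<noteq> 1)" and qnz: "q \<noteq> 0"
  shows "inj (qint q)"
proof (rule injI)
  fix k l assume e: "qint q k = qint q l"
  show "k = l"
  proof (cases "q = 1")
    case True thus ?thesis using e by (simp add: qint_def)
  next
    case False
    hence nr: "\<forall>m>0. q ^ m \<noteq> 1" using assms by simp
    have "(1 - q ^ k) / (1 - q) = (1 - q ^ l) / (1 - q)" using e False by (simp add: qint_def sum_gp_strict)
    hence pk: "q ^ k = q ^ l" using False by (simp add: divide_cancel_right)
    show ?thesis
    proof (rule ccontr)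
      assume "k \<noteq> l"
      hence "k < l \<or> l < k" by linarith
      thus False
      proof
        assume "k < l"
        hence "q ^ l = q ^ k * q ^ (l - k)" by (simp add: power_add[symmetric])
        hence "q ^ (l - k) = 1" using pk qnz by simp
        thus False using nr \<open>k < l\<close> by simp
      next
        assume "l < k"
        hence "q ^ k = q ^ l * q ^ (k - l)" by (simp add: power_add[symmetric])
        hence "q ^ (k - l) = 1" using pk qnz by simp
        thus False using nr \<open>l < k\<close> by simp
      qed
    qed
  qed
qed

lemma infinite_nonroot:
  assumes "q \<noteq> 0" "q = 1 \<or> (\<forall>m>0. q ^ m \<noteq> 1)"
  shows "infinite {Spoly x q | x. x > 1}"
proof
  assume f: "finite {Spoly x q | x. x > 1}"
  have "qint q ` {1..} \<subseteq> {Spoly x q | x. x > 1}" using family_S[OF assms(1)] by auto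
  hence "finite (qint q ` {1..})" using f finite_subset by blast
  hence "finite ({1..} :: nat set)" using qint_inj[OF assms(2) assms(1)] finite_imageD inj_on_subset by blast
  thus False by (simp add: infinite_Ici)
qed

definition orb :: "(complex \<times> complex) list \<Rightarrow> (complex \<times> complex) set" where
  "orb W = (\<lambda>(m, w). (m * fst w, m * snd w)) ` ({z. z ^ 60 = 1} \<times> set W)"

lemma inO: "mu ^ 60 = 1 \<Longrightarrow> (a, b) \<in> set W \<Longrightarrow> x = mu * a \<Longrightarrow> y = mu * b \<Longrightarrow> (x, y) \<in> orb W"
  unfolding orb_def by (rule image_eqI[of _ _ "(mu, (a, b))"]) auto

lemma mu_pow: assumes "(z::complex) ^ 60 = 1" shows "(z ^ k) ^ 60 = 1"
proof -
  have "(z ^ k) ^ 60 = z ^ (k * 60)" by (rule power_mult[symmetric])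
  also have "k * 60 = 60 * k" by simp
  also have "z ^ (60 * k) = (z ^ 60) ^ k" by (rule power_mult)
  finally show ?thesis using assms by simp
qed

lemma mu_pow_neg: "(z::complex) ^ 60 = 1 \<Longrightarrow> (- (z ^ k)) ^ 60 = 1"
  using mu_pow[of z k] by simp

lemma mvec_scale: "mvec X (m * a, m * b) = (m * fst (mvec X (a, b)), m * snd (mvec X (a, b)))"
  by (cases X) (simp add: algebra_simps)

lemma orbE:
  assumes "v \<in> orb W"
  obtains m a b where "m ^ 60 = 1" "(a, b) \<in> set W" "v = (m * a, m * b)"
proof -
  obtain p where p: "p \<in> {z. z ^ 60 = 1} \<times> set W" "v = (\<lambda>(m, w). (m * fst w, m * snd w)) p"
    using assms unfolding orb_def by (rule imageE)
  obtain m a b where pm: "p = (m, (a, b))" by (cases p) auto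
  show ?thesis using p pm by (intro that[of m a b]) auto
qed

lemma orb_closed:
  assumes cl: "\<forall>w\<in>set W. mvec X w \<in> orb W" and v: "v \<in> orb W"
  shows "mvec X v \<in> orb W"
proof -
  obtain m a b where m: "m ^ 60 = 1" "(a, b) \<in> set W" "v = (m * a, m * b)"
    using orbE[OF v] by blast
  have "mvec X (a, b) \<in> orb W" using cl m(2) by blast
  then obtain m' a' b' where m': "m' ^ 60 = 1" "(a', b') \<in> set W" "mvec X (a, b) = (m' * a', m' * b')"
    by (rule orbE)
  have e1: "mvec X v = (m * fst (mvec X (a, b)), m * snd (mvec X (a, b)))"
    unfolding m(3) by (rule mvec_scale)
  have e2: "mvec X v = ((m * m') * a', (m * m') * b')"
    unfolding e1 m'(3) by (simp add: mult_ac)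
  have "(m * m') ^ 60 = 1" using m(1) m'(1) by (simp add: power_mult_distrib)
  thus ?thesis unfolding e2 using inO m'(2) by blast
qed

lemma orbit_finite:
  assumes q: "q \<noteq> 0" and W1: "(1, 0) \<in> set W"
    and cR: "\<forall>w\<in>set W. mvec (Rq q) w \<in> orb W" and cS: "\<forall>w\<in>set W. mvec (Sq q) w \<in> orb W"
  shows "finite {Spoly x q | x. x > 1}"
proof -
  have Rk: "mvec (mat2_pow (Rq q) k) v \<in> orb W" if "v \<in> orb W" for k v
    using that by (induction k) (simp_all add: mvec_id mvec_mult orb_closed[OF cR])
  have col: "mvec (Mq q cs) (1, 0) \<in> orb W" for cs
  proof (induction cs)
    case Nil
    have "((1::complex), (0::complex)) = (1 * 1, 1 * 0)" by simp
    thus ?case using inO[of 1 1 0 W 1 0] W1 by (simp add: mvec_id)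
  next
    case (Cons c cs)
    thus ?case by (simp add: mvec_mult Rk orb_closed[OF cS])
  qed
  have fO: "finite (orb W)" unfolding orb_def by (intro finite_imageI finite_cartesian_product finite_roots_unity) auto
  have "{Spoly x q | x. x > 1} \<subseteq> snd ` orb W"
  proof
    fix y assume "y \<in> {Spoly x q | x. x > 1}"
    then obtain x where y: "y = Spoly x q" by blast
    have "y = snd (mvec (Mq q (ncf_expansion x)) (1, 0))"
      unfolding y Spoly_def by (cases "Mq q (ncf_expansion x)") simp
    thus "y \<in> snd ` orb W" using col by blast
  qed
  thus ?thesis using fO finite_subset by blast
qed

lemma orbit_2:
  fixes z :: complex
  assumes rel: "z + 1 = 0"
  shows "finite {Spoly x z | x. x > 1}"
proof -
  have zn: "z ^ 2 = 1" by ((insert rel, algebra) | (simp add: algebra_simps power2_eq_square power3_eq_cube; fail) | algebra)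
  have znz: "z \<noteq> 0"
  proof
    assume "z = 0" thus False using zn by simp
  qed
  have "z * z ^ 1 = 1" using zn by algebra
  hence zinv: "inverse z = z ^ 1" by (rule inverse_unique)
  have "z ^ 60 = (z ^ 2) ^ 30" by (simp flip: power_mult)
  hence z60: "z ^ 60 = 1" using zn by simp
  define W :: "(complex \<times> complex) list" where "W = [((1), 0), (0, (1)), ((1), (1))]"
  have sW: "set W = set [((1), 0), (0, (1)), ((1), (1))]" unfolding W_def by simp
  have Rv: "\<And>a b. mvec (Rq z) (a, b) = (z * a + b, b)" by (simp add: Rq_def)
  have Sv: "\<And>a b. mvec (Sq z) (a, b) = (- (z ^ 1) * b, a)" by (simp add: Sq_def zinv)

  have cR0: "mvec (Rq z) ((1), 0) \<in> orb W"
    unfolding Rv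
  proof (rule inO[of "z" "(1)" "0" W])
    show "(z :: complex) ^ 60 = 1" by (rule z60)
    show "((1), 0) \<in> set W" unfolding W_def by simp
    show "(z * (1) + 0 :: complex) = (z) * (1)" by (rule refl | algebra | simp add: algebra_simps)
    show "(0 :: complex) = (z) * 0" by (rule refl | algebra | simp add: algebra_simps)
  qed

  have cS0: "mvec (Sq z) ((1), 0) \<in> orb W"
    unfolding Sv
  proof (rule inO[of "1" "0" "(1)" W])
    show "(1 :: complex) ^ 60 = 1" by simp
    show "(0, (1)) \<in> set W" unfolding W_def by simp
    show "(- (z ^ 1) * 0 :: complex) = (1) * 0" by (rule refl | algebra | simp add: algebra_simps)
    show "((1) :: complex) = (1) * (1)" by (rule refl | algebra | simp add: algebra_simps)
  qed

  have cR1: "mvec (Rq z) (0, (1)) \<in> orb W"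
    unfolding Rv
  proof (rule inO[of "1" "(1)" "(1)" W])
    show "(1 :: complex) ^ 60 = 1" by simp
    show "((1), (1)) \<in> set W" unfolding W_def by simp
    show "(z * 0 + (1) :: complex) = (1) * (1)" by (rule refl | algebra | simp add: algebra_simps)
    show "((1) :: complex) = (1) * (1)" by (rule refl | algebra | simp add: algebra_simps)
  qed

  have cS1: "mvec (Sq z) (0, (1)) \<in> orb W"
    unfolding Sv
  proof (rule inO[of "1" "(1)" "0" W])
    show "(1 :: complex) ^ 60 = 1" by simp
    show "((1), 0) \<in> set W" unfolding W_def by simp
    show "(- (z ^ 1) * (1) :: complex) = (1) * (1)" using rel by algebra
    show "(0 :: complex) = (1) * 0" by (rule refl | algebra | simp add: algebra_simps)
  qed

  have cR2: "mvec (Rq z) ((1), (1)) \<in> orb W"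
    unfolding Rv
  proof (rule inO[of "1" "0" "(1)" W])
    show "(1 :: complex) ^ 60 = 1" by simp
    show "(0, (1)) \<in> set W" unfolding W_def by simp
    show "(z * (1) + (1) :: complex) = (1) * 0" using rel by algebra
    show "((1) :: complex) = (1) * (1)" by (rule refl | algebra | simp add: algebra_simps)
  qed

  have cS2: "mvec (Sq z) ((1), (1)) \<in> orb W"
    unfolding Sv
  proof (rule inO[of "1" "(1)" "(1)" W])
    show "(1 :: complex) ^ 60 = 1" by simp
    show "((1), (1)) \<in> set W" unfolding W_def by simp
    show "(- (z ^ 1) * (1) :: complex) = (1) * (1)" using rel by algebra
    show "((1) :: complex) = (1) * (1)" by (rule refl | algebra | simp add: algebra_simps)
  qed

  show ?thesis
  proof (rule orbit_finite[OF znz, of W])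
    show "(1, 0) \<in> set W" unfolding W_def by simp
    show "\<forall>w\<in>set W. mvec (Rq z) w \<in> orb W"
    proof
      fix w assume "w \<in> set W"
      hence "w = ((1), 0) \<or> w = (0, (1)) \<or> w = ((1), (1))" unfolding W_def by simp
      thus "mvec (Rq z) w \<in> orb W" by (elim disjE) (simp_all only: cR0 cR1 cR2)
    qed
    show "\<forall>w\<in>set W. mvec (Sq z) w \<in> orb W"
    proof
      fix w assume "w \<in> set W"
      hence "w = ((1), 0) \<or> w = (0, (1)) \<or> w = ((1), (1))" unfolding W_def by simp
      thus "mvec (Sq z) w \<in> orb W" by (elim disjE) (simp_all only: cS0 cS1 cS2)
    qed
  qed
qed

lemma orbit_3:
  fixes z :: complex
  assumes rel: "1 + z + z^2 = 0"
  shows "finite {Spoly x z | x. x > 1}"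
proof -
  have zn: "z ^ 3 = 1" by ((insert rel, algebra) | (simp add: algebra_simps power2_eq_square power3_eq_cube; fail) | algebra)
  have znz: "z \<noteq> 0"
  proof
    assume "z = 0" thus False using zn by simp
  qed
  have "z * z ^ 2 = 1" using zn by algebra
  hence zinv: "inverse z = z ^ 2" by (rule inverse_unique)
  have "z ^ 60 = (z ^ 3) ^ 20" by (simp flip: power_mult)
  hence z60: "z ^ 60 = 1" using zn by simp
  define W :: "(complex \<times> complex) list" where "W = [((1), 0), (0, (1)), ((1), (1)), ((1 + z), (1))]"
  have sW: "set W = set [((1), 0), (0, (1)), ((1), (1)), ((1 + z), (1))]" unfolding W_def by simp
  have Rv: "\<And>a b. mvec (Rq z) (a, b) = (z * a + b, b)" by (simp add: Rq_def)
  have Sv: "\<And>a b. mvec (Sq z) (a, b) = (- (z ^ 2) * b, a)" by (simp add: Sq_def zinv)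

  have cR0: "mvec (Rq z) ((1), 0) \<in> orb W"
    unfolding Rv
  proof (rule inO[of "z" "(1)" "0" W])
    show "(z :: complex) ^ 60 = 1" by (rule z60)
    show "((1), 0) \<in> set W" unfolding W_def by simp
    show "(z * (1) + 0 :: complex) = (z) * (1)" by (rule refl | algebra | simp add: algebra_simps)
    show "(0 :: complex) = (z) * 0" by (rule refl | algebra | simp add: algebra_simps)
  qed

  have cS0: "mvec (Sq z) ((1), 0) \<in> orb W"
    unfolding Sv
  proof (rule inO[of "1" "0" "(1)" W])
    show "(1 :: complex) ^ 60 = 1" by simp
    show "(0, (1)) \<in> set W" unfolding W_def by simp
    show "(- (z ^ 2) * 0 :: complex) = (1) * 0" by (rule refl | algebra | simp add: algebra_simps)
    show "((1) :: complex) = (1) * (1)" by (rule refl | algebra | simp add: algebra_simps)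
  qed

  have cR1: "mvec (Rq z) (0, (1)) \<in> orb W"
    unfolding Rv
  proof (rule inO[of "1" "(1)" "(1)" W])
    show "(1 :: complex) ^ 60 = 1" by simp
    show "((1), (1)) \<in> set W" unfolding W_def by simp
    show "(z * 0 + (1) :: complex) = (1) * (1)" by (rule refl | algebra | simp add: algebra_simps)
    show "((1) :: complex) = (1) * (1)" by (rule refl | algebra | simp add: algebra_simps)
  qed

  have cS1: "mvec (Sq z) (0, (1)) \<in> orb W"
    unfolding Sv
  proof (rule inO[of "- (z ^ 2)" "(1)" "0" W])
    show "(- (z ^ 2) :: complex) ^ 60 = 1" by (rule mu_pow_neg[OF z60])
    show "((1), 0) \<in> set W" unfolding W_def by simp
    show "(- (z ^ 2) * (1) :: complex) = (- (z ^ 2)) * (1)" by (rule refl | algebra | simp add: algebra_simps)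
    show "(0 :: complex) = (- (z ^ 2)) * 0" by (rule refl | algebra | simp add: algebra_simps)
  qed

  have cR2: "mvec (Rq z) ((1), (1)) \<in> orb W"
    unfolding Rv
  proof (rule inO[of "1" "(1 + z)" "(1)" W])
    show "(1 :: complex) ^ 60 = 1" by simp
    show "((1 + z), (1)) \<in> set W" unfolding W_def by simp
    show "(z * (1) + (1) :: complex) = (1) * (1 + z)" by (rule refl | algebra | simp add: algebra_simps)
    show "((1) :: complex) = (1) * (1)" by (rule refl | algebra | simp add: algebra_simps)
  qed

  have cS2: "mvec (Sq z) ((1), (1)) \<in> orb W"
    unfolding Sv
  proof (rule inO[of "1" "(1 + z)" "(1)" W])
    show "(1 :: complex) ^ 60 = 1" by simp
    show "((1 + z), (1)) \<in> set W" unfolding W_def by simp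
    show "(- (z ^ 2) * (1) :: complex) = (1) * (1 + z)" using rel by algebra
    show "((1) :: complex) = (1) * (1)" by (rule refl | algebra | simp add: algebra_simps)
  qed

  have cR3: "mvec (Rq z) ((1 + z), (1)) \<in> orb W"
    unfolding Rv
  proof (rule inO[of "1" "0" "(1)" W])
    show "(1 :: complex) ^ 60 = 1" by simp
    show "(0, (1)) \<in> set W" unfolding W_def by simp
    show "(z * (1 + z) + (1) :: complex) = (1) * 0" using rel by algebra
    show "((1) :: complex) = (1) * (1)" by (rule refl | algebra | simp add: algebra_simps)
  qed

  have cS3: "mvec (Sq z) ((1 + z), (1)) \<in> orb W"
    unfolding Sv
  proof (rule inO[of "- (z ^ 2)" "(1)" "(1)" W])
    show "(- (z ^ 2) :: complex) ^ 60 = 1" by (rule mu_pow_neg[OF z60])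
    show "((1), (1)) \<in> set W" unfolding W_def by simp
    show "(- (z ^ 2) * (1) :: complex) = (- (z ^ 2)) * (1)" by (rule refl | algebra | simp add: algebra_simps)
    show "((1 + z) :: complex) = (- (z ^ 2)) * (1)" using rel by algebra
  qed

  show ?thesis
  proof (rule orbit_finite[OF znz, of W])
    show "(1, 0) \<in> set W" unfolding W_def by simp
    show "\<forall>w\<in>set W. mvec (Rq z) w \<in> orb W"
    proof
      fix w assume "w \<in> set W"
      hence "w = ((1), 0) \<or> w = (0, (1)) \<or> w = ((1), (1)) \<or> w = ((1 + z), (1))" unfolding W_def by simp
      thus "mvec (Rq z) w \<in> orb W" by (elim disjE) (simp_all only: cR0 cR1 cR2 cR3)
    qed
    show "\<forall>w\<in>set W. mvec (Sq z) w \<in> orb W"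
    proof
      fix w assume "w \<in> set W"
      hence "w = ((1), 0) \<or> w = (0, (1)) \<or> w = ((1), (1)) \<or> w = ((1 + z), (1))" unfolding W_def by simp
      thus "mvec (Sq z) w \<in> orb W" by (elim disjE) (simp_all only: cS0 cS1 cS2 cS3)
    qed
  qed
qed

lemma orbit_4:
  fixes z :: complex
  assumes rel: "z^2 + 1 = 0"
  shows "finite {Spoly x z | x. x > 1}"
proof -
  have zn: "z ^ 4 = 1" by ((insert rel, algebra) | (simp add: algebra_simps power2_eq_square power3_eq_cube; fail) | algebra)
  have znz: "z \<noteq> 0"
  proof
    assume "z = 0" thus False using zn by simp
  qed
  have "z * z ^ 3 = 1" using zn by algebra
  hence zinv: "inverse z = z ^ 3" by (rule inverse_unique)
  have "z ^ 60 = (z ^ 4) ^ 15" by (simp flip: power_mult)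
  hence z60: "z ^ 60 = 1" using zn by simp
  define W :: "(complex \<times> complex) list" where "W = [((1), 0), (0, (1)), ((1), (1)), ((1 + z), (1)), ((z), (1)), ((z), (1 + z))]"
  have sW: "set W = set [((1), 0), (0, (1)), ((1), (1)), ((1 + z), (1)), ((z), (1)), ((z), (1 + z))]" unfolding W_def by simp
  have Rv: "\<And>a b. mvec (Rq z) (a, b) = (z * a + b, b)" by (simp add: Rq_def)
  have Sv: "\<And>a b. mvec (Sq z) (a, b) = (- (z ^ 3) * b, a)" by (simp add: Sq_def zinv)

  have cR0: "mvec (Rq z) ((1), 0) \<in> orb W"
    unfolding Rv
  proof (rule inO[of "z" "(1)" "0" W])
    show "(z :: complex) ^ 60 = 1" by (rule z60)
    show "((1), 0) \<in> set W" unfolding W_def by simp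
    show "(z * (1) + 0 :: complex) = (z) * (1)" by (rule refl | algebra | simp add: algebra_simps)
    show "(0 :: complex) = (z) * 0" by (rule refl | algebra | simp add: algebra_simps)
  qed

  have cS0: "mvec (Sq z) ((1), 0) \<in> orb W"
    unfolding Sv
  proof (rule inO[of "1" "0" "(1)" W])
    show "(1 :: complex) ^ 60 = 1" by simp
    show "(0, (1)) \<in> set W" unfolding W_def by simp
    show "(- (z ^ 3) * 0 :: complex) = (1) * 0" by (rule refl | algebra | simp add: algebra_simps)
    show "((1) :: complex) = (1) * (1)" by (rule refl | algebra | simp add: algebra_simps)
  qed

  have cR1: "mvec (Rq z) (0, (1)) \<in> orb W"
    unfolding Rv
  proof (rule inO[of "1" "(1)" "(1)" W])
    show "(1 :: complex) ^ 60 = 1" by simp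
    show "((1), (1)) \<in> set W" unfolding W_def by simp
    show "(z * 0 + (1) :: complex) = (1) * (1)" by (rule refl | algebra | simp add: algebra_simps)
    show "((1) :: complex) = (1) * (1)" by (rule refl | algebra | simp add: algebra_simps)
  qed

  have cS1: "mvec (Sq z) (0, (1)) \<in> orb W"
    unfolding Sv
  proof (rule inO[of "z" "(1)" "0" W])
    show "(z :: complex) ^ 60 = 1" by (rule z60)
    show "((1), 0) \<in> set W" unfolding W_def by simp
    show "(- (z ^ 3) * (1) :: complex) = (z) * (1)" using rel by algebra
    show "(0 :: complex) = (z) * 0" by (rule refl | algebra | simp add: algebra_simps)
  qed

  have cR2: "mvec (Rq z) ((1), (1)) \<in> orb W"
    unfolding Rv
  proof (rule inO[of "1" "(1 + z)" "(1)" W])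
    show "(1 :: complex) ^ 60 = 1" by simp
    show "((1 + z), (1)) \<in> set W" unfolding W_def by simp
    show "(z * (1) + (1) :: complex) = (1) * (1 + z)" by (rule refl | algebra | simp add: algebra_simps)
    show "((1) :: complex) = (1) * (1)" by (rule refl | algebra | simp add: algebra_simps)
  qed

  have cS2: "mvec (Sq z) ((1), (1)) \<in> orb W"
    unfolding Sv
  proof (rule inO[of "1" "(z)" "(1)" W])
    show "(1 :: complex) ^ 60 = 1" by simp
    show "((z), (1)) \<in> set W" unfolding W_def by simp
    show "(- (z ^ 3) * (1) :: complex) = (1) * (z)" using rel by algebra
    show "((1) :: complex) = (1) * (1)" by (rule refl | algebra | simp add: algebra_simps)
  qed

  have cR3: "mvec (Rq z) ((1 + z), (1)) \<in> orb W"
    unfolding Rv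
  proof (rule inO[of "1" "(z)" "(1)" W])
    show "(1 :: complex) ^ 60 = 1" by simp
    show "((z), (1)) \<in> set W" unfolding W_def by simp
    show "(z * (1 + z) + (1) :: complex) = (1) * (z)" using rel by algebra
    show "((1) :: complex) = (1) * (1)" by (rule refl | algebra | simp add: algebra_simps)
  qed

  have cS3: "mvec (Sq z) ((1 + z), (1)) \<in> orb W"
    unfolding Sv
  proof (rule inO[of "1" "(z)" "(1 + z)" W])
    show "(1 :: complex) ^ 60 = 1" by simp
    show "((z), (1 + z)) \<in> set W" unfolding W_def by simp
    show "(- (z ^ 3) * (1) :: complex) = (1) * (z)" using rel by algebra
    show "((1 + z) :: complex) = (1) * (1 + z)" by (rule refl | algebra | simp add: algebra_simps)
  qed

  have cR4: "mvec (Rq z) ((z), (1)) \<in> orb W"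
    unfolding Rv
  proof (rule inO[of "1" "0" "(1)" W])
    show "(1 :: complex) ^ 60 = 1" by simp
    show "(0, (1)) \<in> set W" unfolding W_def by simp
    show "(z * (z) + (1) :: complex) = (1) * 0" using rel by algebra
    show "((1) :: complex) = (1) * (1)" by (rule refl | algebra | simp add: algebra_simps)
  qed

  have cS4: "mvec (Sq z) ((z), (1)) \<in> orb W"
    unfolding Sv
  proof (rule inO[of "z" "(1)" "(1)" W])
    show "(z :: complex) ^ 60 = 1" by (rule z60)
    show "((1), (1)) \<in> set W" unfolding W_def by simp
    show "(- (z ^ 3) * (1) :: complex) = (z) * (1)" using rel by algebra
    show "((z) :: complex) = (z) * (1)" by (rule refl | algebra | simp add: algebra_simps)
  qed

  have cR5: "mvec (Rq z) ((z), (1 + z)) \<in> orb W"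
    unfolding Rv
  proof (rule inO[of "1" "(z)" "(1 + z)" W])
    show "(1 :: complex) ^ 60 = 1" by simp
    show "((z), (1 + z)) \<in> set W" unfolding W_def by simp
    show "(z * (z) + (1 + z) :: complex) = (1) * (z)" using rel by algebra
    show "((1 + z) :: complex) = (1) * (1 + z)" by (rule refl | algebra | simp add: algebra_simps)
  qed

  have cS5: "mvec (Sq z) ((z), (1 + z)) \<in> orb W"
    unfolding Sv
  proof (rule inO[of "z" "(1 + z)" "(1)" W])
    show "(z :: complex) ^ 60 = 1" by (rule z60)
    show "((1 + z), (1)) \<in> set W" unfolding W_def by simp
    show "(- (z ^ 3) * (1 + z) :: complex) = (z) * (1 + z)" using rel by algebra
    show "((z) :: complex) = (z) * (1)" by (rule refl | algebra | simp add: algebra_simps)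
  qed

  show ?thesis
  proof (rule orbit_finite[OF znz, of W])
    show "(1, 0) \<in> set W" unfolding W_def by simp
    show "\<forall>w\<in>set W. mvec (Rq z) w \<in> orb W"
    proof
      fix w assume "w \<in> set W"
      hence "w = ((1), 0) \<or> w = (0, (1)) \<or> w = ((1), (1)) \<or> w = ((1 + z), (1)) \<or> w = ((z), (1)) \<or> w = ((z), (1 + z))" unfolding W_def by simp
      thus "mvec (Rq z) w \<in> orb W" by (elim disjE) (simp_all only: cR0 cR1 cR2 cR3 cR4 cR5)
    qed
    show "\<forall>w\<in>set W. mvec (Sq z) w \<in> orb W"
    proof
      fix w assume "w \<in> set W"
      hence "w = ((1), 0) \<or> w = (0, (1)) \<or> w = ((1), (1)) \<or> w = ((1 + z), (1)) \<or> w = ((z), (1)) \<or> w = ((z), (1 + z))" unfolding W_def by simp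
      thus "mvec (Sq z) w \<in> orb W" by (elim disjE) (simp_all only: cS0 cS1 cS2 cS3 cS4 cS5)
    qed
  qed
qed

lemma orbit_5:
  fixes z :: complex
  assumes rel: "1 + z + z^2 + z^3 + z^4 = 0"
  shows "finite {Spoly x z | x. x > 1}"
proof -
  have zn: "z ^ 5 = 1" by ((insert rel, algebra) | (simp add: algebra_simps power2_eq_square power3_eq_cube; fail) | algebra)
  have znz: "z \<noteq> 0"
  proof
    assume "z = 0" thus False using zn by simp
  qed
  have "z * z ^ 4 = 1" using zn by algebra
  hence zinv: "inverse z = z ^ 4" by (rule inverse_unique)
  have "z ^ 60 = (z ^ 5) ^ 12" by (simp flip: power_mult)
  hence z60: "z ^ 60 = 1" using zn by simp
  define W :: "(complex \<times> complex) list" where "W = [((1), 0), (0, (1)), ((1), (1)), ((1 + z), (1)), ((1 + z + z^2 + z^3), (1)), ((1 + z + z^2), (1)), ((1 + z + z^2 + z^3), (1 + z)), ((1 + z + z^2 + z^3), (1 + z + z^2)), ((z + z^2), (1 + z + z^2)), ((1 + z + 2 * z^2 + z^3), (1 + z + z^2)), ((z^2 + z^3), (z + z^2)), ((z^2 + z^3), (1 + z + 2 * z^2 + z^3))]"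
  have sW: "set W = set [((1), 0), (0, (1)), ((1), (1)), ((1 + z), (1)), ((1 + z + z^2 + z^3), (1)), ((1 + z + z^2), (1)), ((1 + z + z^2 + z^3), (1 + z)), ((1 + z + z^2 + z^3), (1 + z + z^2)), ((z + z^2), (1 + z + z^2)), ((1 + z + 2 * z^2 + z^3), (1 + z + z^2)), ((z^2 + z^3), (z + z^2)), ((z^2 + z^3), (1 + z + 2 * z^2 + z^3))]" unfolding W_def by simp
  have Rv: "\<And>a b. mvec (Rq z) (a, b) = (z * a + b, b)" by (simp add: Rq_def)
  have Sv: "\<And>a b. mvec (Sq z) (a, b) = (- (z ^ 4) * b, a)" by (simp add: Sq_def zinv)

  have cR0: "mvec (Rq z) ((1), 0) \<in> orb W"
    unfolding Rv
  proof (rule inO[of "z" "(1)" "0" W])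
    show "(z :: complex) ^ 60 = 1" by (rule z60)
    show "((1), 0) \<in> set W" unfolding W_def by simp
    show "(z * (1) + 0 :: complex) = (z) * (1)" by (rule refl | algebra | simp add: algebra_simps)
    show "(0 :: complex) = (z) * 0" by (rule refl | algebra | simp add: algebra_simps)
  qed

  have cS0: "mvec (Sq z) ((1), 0) \<in> orb W"
    unfolding Sv
  proof (rule inO[of "1" "0" "(1)" W])
    show "(1 :: complex) ^ 60 = 1" by simp
    show "(0, (1)) \<in> set W" unfolding W_def by simp
    show "(- (z ^ 4) * 0 :: complex) = (1) * 0" by (rule refl | algebra | simp add: algebra_simps)
    show "((1) :: complex) = (1) * (1)" by (rule refl | algebra | simp add: algebra_simps)
  qed

  have cR1: "mvec (Rq z) (0, (1)) \<in> orb W"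
    unfolding Rv
  proof (rule inO[of "1" "(1)" "(1)" W])
    show "(1 :: complex) ^ 60 = 1" by simp
    show "((1), (1)) \<in> set W" unfolding W_def by simp
    show "(z * 0 + (1) :: complex) = (1) * (1)" by (rule refl | algebra | simp add: algebra_simps)
    show "((1) :: complex) = (1) * (1)" by (rule refl | algebra | simp add: algebra_simps)
  qed

  have cS1: "mvec (Sq z) (0, (1)) \<in> orb W"
    unfolding Sv
  proof (rule inO[of "- (z ^ 4)" "(1)" "0" W])
    show "(- (z ^ 4) :: complex) ^ 60 = 1" by (rule mu_pow_neg[OF z60])
    show "((1), 0) \<in> set W" unfolding W_def by simp
    show "(- (z ^ 4) * (1) :: complex) = (- (z ^ 4)) * (1)" by (rule refl | algebra | simp add: algebra_simps)
    show "(0 :: complex) = (- (z ^ 4)) * 0" by (rule refl | algebra | simp add: algebra_simps)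
  qed

  have cR2: "mvec (Rq z) ((1), (1)) \<in> orb W"
    unfolding Rv
  proof (rule inO[of "1" "(1 + z)" "(1)" W])
    show "(1 :: complex) ^ 60 = 1" by simp
    show "((1 + z), (1)) \<in> set W" unfolding W_def by simp
    show "(z * (1) + (1) :: complex) = (1) * (1 + z)" by (rule refl | algebra | simp add: algebra_simps)
    show "((1) :: complex) = (1) * (1)" by (rule refl | algebra | simp add: algebra_simps)
  qed

  have cS2: "mvec (Sq z) ((1), (1)) \<in> orb W"
    unfolding Sv
  proof (rule inO[of "1" "(1 + z + z^2 + z^3)" "(1)" W])
    show "(1 :: complex) ^ 60 = 1" by simp
    show "((1 + z + z^2 + z^3), (1)) \<in> set W" unfolding W_def by simp
    show "(- (z ^ 4) * (1) :: complex) = (1) * (1 + z + z^2 + z^3)" using rel by algebra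
    show "((1) :: complex) = (1) * (1)" by (rule refl | algebra | simp add: algebra_simps)
  qed

  have cR3: "mvec (Rq z) ((1 + z), (1)) \<in> orb W"
    unfolding Rv
  proof (rule inO[of "1" "(1 + z + z^2)" "(1)" W])
    show "(1 :: complex) ^ 60 = 1" by simp
    show "((1 + z + z^2), (1)) \<in> set W" unfolding W_def by simp
    show "(z * (1 + z) + (1) :: complex) = (1) * (1 + z + z^2)" by (rule refl | algebra | simp add: algebra_simps)
    show "((1) :: complex) = (1) * (1)" by (rule refl | algebra | simp add: algebra_simps)
  qed

  have cS3: "mvec (Sq z) ((1 + z), (1)) \<in> orb W"
    unfolding Sv
  proof (rule inO[of "1" "(1 + z + z^2 + z^3)" "(1 + z)" W])
    show "(1 :: complex) ^ 60 = 1" by simp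
    show "((1 + z + z^2 + z^3), (1 + z)) \<in> set W" unfolding W_def by simp
    show "(- (z ^ 4) * (1) :: complex) = (1) * (1 + z + z^2 + z^3)" using rel by algebra
    show "((1 + z) :: complex) = (1) * (1 + z)" by (rule refl | algebra | simp add: algebra_simps)
  qed

  have cR4: "mvec (Rq z) ((1 + z + z^2 + z^3), (1)) \<in> orb W"
    unfolding Rv
  proof (rule inO[of "1" "0" "(1)" W])
    show "(1 :: complex) ^ 60 = 1" by simp
    show "(0, (1)) \<in> set W" unfolding W_def by simp
    show "(z * (1 + z + z^2 + z^3) + (1) :: complex) = (1) * 0" using rel by algebra
    show "((1) :: complex) = (1) * (1)" by (rule refl | algebra | simp add: algebra_simps)
  qed

  have cS4: "mvec (Sq z) ((1 + z + z^2 + z^3), (1)) \<in> orb W"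
    unfolding Sv
  proof (rule inO[of "- (z ^ 4)" "(1)" "(1)" W])
    show "(- (z ^ 4) :: complex) ^ 60 = 1" by (rule mu_pow_neg[OF z60])
    show "((1), (1)) \<in> set W" unfolding W_def by simp
    show "(- (z ^ 4) * (1) :: complex) = (- (z ^ 4)) * (1)" by (rule refl | algebra | simp add: algebra_simps)
    show "((1 + z + z^2 + z^3) :: complex) = (- (z ^ 4)) * (1)" using rel by algebra
  qed

  have cR5: "mvec (Rq z) ((1 + z + z^2), (1)) \<in> orb W"
    unfolding Rv
  proof (rule inO[of "1" "(1 + z + z^2 + z^3)" "(1)" W])
    show "(1 :: complex) ^ 60 = 1" by simp
    show "((1 + z + z^2 + z^3), (1)) \<in> set W" unfolding W_def by simp
    show "(z * (1 + z + z^2) + (1) :: complex) = (1) * (1 + z + z^2 + z^3)" by (rule refl | algebra | simp add: algebra_simps)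
    show "((1) :: complex) = (1) * (1)" by (rule refl | algebra | simp add: algebra_simps)
  qed

  have cS5: "mvec (Sq z) ((1 + z + z^2), (1)) \<in> orb W"
    unfolding Sv
  proof (rule inO[of "1" "(1 + z + z^2 + z^3)" "(1 + z + z^2)" W])
    show "(1 :: complex) ^ 60 = 1" by simp
    show "((1 + z + z^2 + z^3), (1 + z + z^2)) \<in> set W" unfolding W_def by simp
    show "(- (z ^ 4) * (1) :: complex) = (1) * (1 + z + z^2 + z^3)" using rel by algebra
    show "((1 + z + z^2) :: complex) = (1) * (1 + z + z^2)" by (rule refl | algebra | simp add: algebra_simps)
  qed

  have cR6: "mvec (Rq z) ((1 + z + z^2 + z^3), (1 + z)) \<in> orb W"
    unfolding Rv
  proof (rule inO[of "- (z ^ 2)" "(1 + z + z^2 + z^3)" "(1 + z + z^2)" W])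
    show "(- (z ^ 2) :: complex) ^ 60 = 1" by (rule mu_pow_neg[OF z60])
    show "((1 + z + z^2 + z^3), (1 + z + z^2)) \<in> set W" unfolding W_def by simp
    show "(z * (1 + z + z^2 + z^3) + (1 + z) :: complex) = (- (z ^ 2)) * (1 + z + z^2 + z^3)" using rel by algebra
    show "((1 + z) :: complex) = (- (z ^ 2)) * (1 + z + z^2)" using rel by algebra
  qed

  have cS6: "mvec (Sq z) ((1 + z + z^2 + z^3), (1 + z)) \<in> orb W"
    unfolding Sv
  proof (rule inO[of "- (z ^ 4)" "(1 + z)" "(1)" W])
    show "(- (z ^ 4) :: complex) ^ 60 = 1" by (rule mu_pow_neg[OF z60])
    show "((1 + z), (1)) \<in> set W" unfolding W_def by simp
    show "(- (z ^ 4) * (1 + z) :: complex) = (- (z ^ 4)) * (1 + z)" by (rule refl | algebra | simp add: algebra_simps)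
    show "((1 + z + z^2 + z^3) :: complex) = (- (z ^ 4)) * (1)" using rel by algebra
  qed

  have cR7: "mvec (Rq z) ((1 + z + z^2 + z^3), (1 + z + z^2)) \<in> orb W"
    unfolding Rv
  proof (rule inO[of "1" "(z + z^2)" "(1 + z + z^2)" W])
    show "(1 :: complex) ^ 60 = 1" by simp
    show "((z + z^2), (1 + z + z^2)) \<in> set W" unfolding W_def by simp
    show "(z * (1 + z + z^2 + z^3) + (1 + z + z^2) :: complex) = (1) * (z + z^2)" using rel by algebra
    show "((1 + z + z^2) :: complex) = (1) * (1 + z + z^2)" by (rule refl | algebra | simp add: algebra_simps)
  qed

  have cS7: "mvec (Sq z) ((1 + z + z^2 + z^3), (1 + z + z^2)) \<in> orb W"
    unfolding Sv
  proof (rule inO[of "- (z ^ 4)" "(1 + z + z^2)" "(1)" W])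
    show "(- (z ^ 4) :: complex) ^ 60 = 1" by (rule mu_pow_neg[OF z60])
    show "((1 + z + z^2), (1)) \<in> set W" unfolding W_def by simp
    show "(- (z ^ 4) * (1 + z + z^2) :: complex) = (- (z ^ 4)) * (1 + z + z^2)" by (rule refl | algebra | simp add: algebra_simps)
    show "((1 + z + z^2 + z^3) :: complex) = (- (z ^ 4)) * (1)" using rel by algebra
  qed

  have cR8: "mvec (Rq z) ((z + z^2), (1 + z + z^2)) \<in> orb W"
    unfolding Rv
  proof (rule inO[of "1" "(1 + z + 2 * z^2 + z^3)" "(1 + z + z^2)" W])
    show "(1 :: complex) ^ 60 = 1" by simp
    show "((1 + z + 2 * z^2 + z^3), (1 + z + z^2)) \<in> set W" unfolding W_def by simp
    show "(z * (z + z^2) + (1 + z + z^2) :: complex) = (1) * (1 + z + 2 * z^2 + z^3)" by (rule refl | algebra | simp add: algebra_simps)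
    show "((1 + z + z^2) :: complex) = (1) * (1 + z + z^2)" by (rule refl | algebra | simp add: algebra_simps)
  qed

  have cS8: "mvec (Sq z) ((z + z^2), (1 + z + z^2)) \<in> orb W"
    unfolding Sv
  proof (rule inO[of "1" "(z^2 + z^3)" "(z + z^2)" W])
    show "(1 :: complex) ^ 60 = 1" by simp
    show "((z^2 + z^3), (z + z^2)) \<in> set W" unfolding W_def by simp
    show "(- (z ^ 4) * (1 + z + z^2) :: complex) = (1) * (z^2 + z^3)" using rel by algebra
    show "((z + z^2) :: complex) = (1) * (z + z^2)" by (rule refl | algebra | simp add: algebra_simps)
  qed

  have cR9: "mvec (Rq z) ((1 + z + 2 * z^2 + z^3), (1 + z + z^2)) \<in> orb W"
    unfolding Rv
  proof (rule inO[of "- (z ^ 2)" "(z^2 + z^3)" "(z + z^2)" W])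
    show "(- (z ^ 2) :: complex) ^ 60 = 1" by (rule mu_pow_neg[OF z60])
    show "((z^2 + z^3), (z + z^2)) \<in> set W" unfolding W_def by simp
    show "(z * (1 + z + 2 * z^2 + z^3) + (1 + z + z^2) :: complex) = (- (z ^ 2)) * (z^2 + z^3)" using rel by algebra
    show "((1 + z + z^2) :: complex) = (- (z ^ 2)) * (z + z^2)" using rel by algebra
  qed

  have cS9: "mvec (Sq z) ((1 + z + 2 * z^2 + z^3), (1 + z + z^2)) \<in> orb W"
    unfolding Sv
  proof (rule inO[of "1" "(z^2 + z^3)" "(1 + z + 2 * z^2 + z^3)" W])
    show "(1 :: complex) ^ 60 = 1" by simp
    show "((z^2 + z^3), (1 + z + 2 * z^2 + z^3)) \<in> set W" unfolding W_def by simp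
    show "(- (z ^ 4) * (1 + z + z^2) :: complex) = (1) * (z^2 + z^3)" using rel by algebra
    show "((1 + z + 2 * z^2 + z^3) :: complex) = (1) * (1 + z + 2 * z^2 + z^3)" by (rule refl | algebra | simp add: algebra_simps)
  qed

  have cR10: "mvec (Rq z) ((z^2 + z^3), (z + z^2)) \<in> orb W"
    unfolding Rv
  proof (rule inO[of "z" "(1 + z + z^2 + z^3)" "(1 + z)" W])
    show "(z :: complex) ^ 60 = 1" by (rule z60)
    show "((1 + z + z^2 + z^3), (1 + z)) \<in> set W" unfolding W_def by simp
    show "(z * (z^2 + z^3) + (z + z^2) :: complex) = (z) * (1 + z + z^2 + z^3)" by (rule refl | algebra | simp add: algebra_simps)
    show "((z + z^2) :: complex) = (z) * (1 + z)" by (rule refl | algebra | simp add: algebra_simps)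
  qed

  have cS10: "mvec (Sq z) ((z^2 + z^3), (z + z^2)) \<in> orb W"
    unfolding Sv
  proof (rule inO[of "- (z ^ 4)" "(z + z^2)" "(1 + z + z^2)" W])
    show "(- (z ^ 4) :: complex) ^ 60 = 1" by (rule mu_pow_neg[OF z60])
    show "((z + z^2), (1 + z + z^2)) \<in> set W" unfolding W_def by simp
    show "(- (z ^ 4) * (z + z^2) :: complex) = (- (z ^ 4)) * (z + z^2)" by (rule refl | algebra | simp add: algebra_simps)
    show "((z^2 + z^3) :: complex) = (- (z ^ 4)) * (1 + z + z^2)" using rel by algebra
  qed

  have cR11: "mvec (Rq z) ((z^2 + z^3), (1 + z + 2 * z^2 + z^3)) \<in> orb W"
    unfolding Rv
  proof (rule inO[of "1" "(z^2 + z^3)" "(1 + z + 2 * z^2 + z^3)" W])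
    show "(1 :: complex) ^ 60 = 1" by simp
    show "((z^2 + z^3), (1 + z + 2 * z^2 + z^3)) \<in> set W" unfolding W_def by simp
    show "(z * (z^2 + z^3) + (1 + z + 2 * z^2 + z^3) :: complex) = (1) * (z^2 + z^3)" using rel by algebra
    show "((1 + z + 2 * z^2 + z^3) :: complex) = (1) * (1 + z + 2 * z^2 + z^3)" by (rule refl | algebra | simp add: algebra_simps)
  qed

  have cS11: "mvec (Sq z) ((z^2 + z^3), (1 + z + 2 * z^2 + z^3)) \<in> orb W"
    unfolding Sv
  proof (rule inO[of "- (z ^ 4)" "(1 + z + 2 * z^2 + z^3)" "(1 + z + z^2)" W])
    show "(- (z ^ 4) :: complex) ^ 60 = 1" by (rule mu_pow_neg[OF z60])
    show "((1 + z + 2 * z^2 + z^3), (1 + z + z^2)) \<in> set W" unfolding W_def by simp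
    show "(- (z ^ 4) * (1 + z + 2 * z^2 + z^3) :: complex) = (- (z ^ 4)) * (1 + z + 2 * z^2 + z^3)" by (rule refl | algebra | simp add: algebra_simps)
    show "((z^2 + z^3) :: complex) = (- (z ^ 4)) * (1 + z + z^2)" using rel by algebra
  qed

  show ?thesis
  proof (rule orbit_finite[OF znz, of W])
    show "(1, 0) \<in> set W" unfolding W_def by simp
    show "\<forall>w\<in>set W. mvec (Rq z) w \<in> orb W"
    proof
      fix w assume "w \<in> set W"
      hence "w = ((1), 0) \<or> w = (0, (1)) \<or> w = ((1), (1)) \<or> w = ((1 + z), (1)) \<or> w = ((1 + z + z^2 + z^3), (1)) \<or> w = ((1 + z + z^2), (1)) \<or> w = ((1 + z + z^2 + z^3), (1 + z)) \<or> w = ((1 + z + z^2 + z^3), (1 + z + z^2)) \<or> w = ((z + z^2), (1 + z + z^2)) \<or> w = ((1 + z + 2 * z^2 + z^3), (1 + z + z^2)) \<or> w = ((z^2 + z^3), (z + z^2)) \<or> w = ((z^2 + z^3), (1 + z + 2 * z^2 + z^3))" unfolding W_def by simp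
      thus "mvec (Rq z) w \<in> orb W" by (elim disjE) (simp_all only: cR0 cR1 cR2 cR3 cR4 cR5 cR6 cR7 cR8 cR9 cR10 cR11)
    qed
    show "\<forall>w\<in>set W. mvec (Sq z) w \<in> orb W"
    proof
      fix w assume "w \<in> set W"
      hence "w = ((1), 0) \<or> w = (0, (1)) \<or> w = ((1), (1)) \<or> w = ((1 + z), (1)) \<or> w = ((1 + z + z^2 + z^3), (1)) \<or> w = ((1 + z + z^2), (1)) \<or> w = ((1 + z + z^2 + z^3), (1 + z)) \<or> w = ((1 + z + z^2 + z^3), (1 + z + z^2)) \<or> w = ((z + z^2), (1 + z + z^2)) \<or> w = ((1 + z + 2 * z^2 + z^3), (1 + z + z^2)) \<or> w = ((z^2 + z^3), (z + z^2)) \<or> w = ((z^2 + z^3), (1 + z + 2 * z^2 + z^3))" unfolding W_def by simp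
      thus "mvec (Sq z) w \<in> orb W" by (elim disjE) (simp_all only: cS0 cS1 cS2 cS3 cS4 cS5 cS6 cS7 cS8 cS9 cS10 cS11)
    qed
  qed
qed

lemma madj_smul: "madj (smul s X) = smul s (madj X)"
  by (cases X) simp

lemma minv_smul: "s \<noteq> 0 \<Longrightarrow> minv (smul s X) = smul (1/s) (minv X)"
proof -
  assume s: "s \<noteq> 0"
  have "minv (smul s X) = smul (1 / (s^2 * mdet X) * s) (madj X)"
    unfolding minv_def mdet_smul madj_smul smul_smul by simp
  also have "1 / (s^2 * mdet X) * s = 1/s * (1 / mdet X)"
    using s by (cases "mdet X = 0") (simp_all add: field_simps power2_eq_square)
  finally show ?thesis unfolding minv_def smul_smul .
qed

lemma comm_smul: "s \<noteq> 0 \<Longrightarrow> t \<noteq> 0 \<Longrightarrow> comm (smul s X) (smul t Y) = comm X Y"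
proof -
  assume s: "s \<noteq> 0" and t: "t \<noteq> 0"
  have "comm (smul s X) (smul t Y) = smul (s * t * (1/s) * (1/t)) (comm X Y)"
    unfolding comm_def minv_smul[OF s] minv_smul[OF t] mult_smul_left mult_smul_right smul_smul
    by (simp add: mult_ac)
  also have "s * t * (1/s) * (1/t) = 1" using s t by simp
  finally show ?thesis by (cases "comm X Y") simp
qed

lemma beta_smul: "s \<noteq> 0 \<Longrightarrow> t \<noteq> 0 \<Longrightarrow> beta (smul s X) (smul t Y) = beta X Y"
  unfolding beta_def by (simp add: comm_smul)

lemma tau_smul: "s \<noteq> 0 \<Longrightarrow> tau (smul s X) = tau X"
  unfolding tau_def by (simp add: mtr_smul mdet_smul power_mult_distrib)

lemma beta_A0B0:
  assumes "w \<noteq> 0"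
  shows "beta (w, b, 0, 1) (1, 0, - b * z, w) = (b^2 * z) * (b^2 * z + (w - 1)^2) / w^2"
proof -
  have d1: "mdet (w, b, 0, 1) \<noteq> 0" using assms by simp
  have d2: "mdet (1, 0, - b * z, w) \<noteq> 0" using assms by simp
  show ?thesis
    unfolding beta_def mtr_comm[OF d1 d2] using assms
    by (simp add: field_simps power2_eq_square) (simp add: algebra_simps)?
qed

lemma qint_shift: "q ^ n = 1 \<Longrightarrow> q \<noteq> 1 \<Longrightarrow> qint q (j + n) = qint q j"
  unfolding qint_def by (simp add: sum_gp_strict power_add)

lemma qint_mul: "(q - 1) * qint q j = q ^ j - 1"
  unfolding qint_def by (cases "q = 1") (simp_all add: sum_gp_strict field_simps)

lemma A_form:
  assumes "q \<noteq> 0" "q ^ n = 1" "q \<noteq> 1"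
  shows "Mq q [int j + int n, int n] = smul (- inverse q) (q ^ j, qint q j, 0, 1)"
proof -
  have "nat (int j + int n) = j + n" by simp
  moreover have "Mq q [int n] = Sq q" using Mq_n[OF assms(2,3)] .
  ultimately have "Mq q [int j + int n, int n] = mat2_mult (mat2_mult (mat2_pow (Rq q) (j + n)) (Sq q)) (Sq q)"
    by simp
  also have "\<dots> = smul (- inverse q) (q ^ j, qint q j, 0, 1)"
    using assms by (simp add: Rpow qint_shift power_add Sq_def)
  finally show ?thesis .
qed

lemma B_form:
  assumes "q \<noteq> 0" "s \<noteq> 0"
  shows "mat2_mult (mat2_mult (Sq q) (smul s (w, b, 0, 1))) (minv (Sq q)) = smul s (1, 0, - b * q, w)"
  using assms by (simp add: Sq_def minv_def field_simps)

lemma prim_pos: "primitive_root_of_unity n z \<Longrightarrow> n > 0 \<and> z ^ n = 1"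
  by (simp add: primitive_root_of_unity_def)

lemma prim_ne1: "primitive_root_of_unity n z \<Longrightarrow> n \<ge> 2 \<Longrightarrow> z \<noteq> 1"
  unfolding primitive_root_of_unity_def by (metis one_less_numeral_iff le_less_trans less_numeral_extra(1) power_one_right semiring_norm(76) numeral_le_iff less_le_trans one_less_numeral_iff)

lemma root_exists:
  assumes p: "primitive_root_of_unity n z"
  shows "\<exists>j<n. z ^ j = cis (2 * pi / n)"
proof -
  have n: "n > 0" "z ^ n = 1" using prim_pos[OF p] by auto
  have inj: "inj_on (\<lambda>j. z ^ j) {..<n}"
  proof (rule inj_onI)
    fix i k assume ik: "i \<in> {..<n}" "k \<in> {..<n}" "z ^ i = z ^ k"
    have znz: "z \<noteq> 0" using n by (metis power_0_left zero_neq_one not_gr0)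
    show "i = k"
    proof (rule ccontr)
      assume "i \<noteq> k"
      hence "i < k \<or> k < i" by linarith
      thus False
      proof
        assume lt: "i < k"
        hence "z ^ k = z ^ i * z ^ (k - i)" by (simp add: power_add[symmetric])
        hence "z ^ (k - i) = 1" using ik znz by simp
        thus False using p lt ik unfolding primitive_root_of_unity_def by auto
      next
        assume lt: "k < i"
        hence "z ^ i = z ^ k * z ^ (i - k)" by (simp add: power_add[symmetric])
        hence "z ^ (i - k) = 1" using ik znz by simp
        thus False using p lt ik unfolding primitive_root_of_unity_def by auto
      qed
    qed
  qed
  have sub: "(\<lambda>j. z ^ j) ` {..<n} \<subseteq> {w. w ^ n = 1}"
  proof
    fix w assume "w \<in> (\<lambda>j. z ^ j) ` {..<n}"
    then obtain j where "w = z ^ j" by blast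
    hence "w ^ n = (z ^ n) ^ j" by (simp add: power_mult[symmetric] mult.commute)
    thus "w \<in> {w. w ^ n = 1}" using n by simp
  qed
  have "card ((\<lambda>j. z ^ j) ` {..<n}) = n" using card_image[OF inj] by simp
  hence eq: "(\<lambda>j. z ^ j) ` {..<n} = {w. w ^ n = 1}"
    using card_subset_eq[OF finite_roots_unity sub] card_roots_unity_eq[OF n(1)] n(1) by simp
  have "cis (2 * pi / n) ^ n = 1" using n(1) by (simp add: DeMoivre)
  hence "cis (2 * pi / n) \<in> (\<lambda>j. z ^ j) ` {..<n}" using eq by simp
  thus ?thesis by auto
qed

lemma AB_in:
  assumes z0: "z \<noteq> 0" and zn: "z ^ n = 1" and z1: "z \<noteq> 1" and n2: "n \<ge> 2"
    and G: "fgrp (Mq z ` {cs. valid cs})"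
  shows "smul (- inverse z) (z ^ j, qint z j, 0, 1) \<in> Mq z ` {cs. valid cs}"
    and "smul (- inverse z) (1, 0, - qint z j * z, z ^ j) \<in> Mq z ` {cs. valid cs}"
proof -
  let ?G = "Mq z ` {cs. valid cs}"
  have vA: "valid [int j + int n, int n]" using n2 by (simp add: valid_def)
  show A: "smul (- inverse z) (z ^ j, qint z j, 0, 1) \<in> ?G"
    using A_form[OF z0 zn z1, of j] vA by (intro image_eqI[of _ _ "[int j + int n, int n]"]) auto
  have vS: "valid [int n]" using n2 by (simp add: valid_def)
  have S: "Sq z \<in> ?G" using Mq_n[OF zn z1] vS by (intro image_eqI[of _ _ "[int n]"]) auto
  have Si: "minv (Sq z) \<in> ?G" using fgrp_inv[OF G S] .
  have s0: "- inverse z \<noteq> 0" using z0 by simp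
  have "mat2_mult (mat2_mult (Sq z) (smul (- inverse z) (z ^ j, qint z j, 0, 1))) (minv (Sq z)) \<in> ?G"
    using fgrp_mult[OF G fgrp_mult[OF G S A] Si] .
  thus "smul (- inverse z) (1, 0, - qint z j * z, z ^ j) \<in> ?G" using B_form[OF z0 s0] by simp
qed

lemma tau_A0: "w \<noteq> 0 \<Longrightarrow> tau (w, b, 0, 1) = (w + 1)^2 / w"
  by (simp add: tau_def)
lemma tau_B0: "w \<noteq> 0 \<Longrightarrow> tau (1, 0, c, w) = (w + 1)^2 / w"
  by (simp add: tau_def add.commute)

lemma beta_AB:
  assumes z0: "z \<noteq> 0" and w0: "z ^ j \<noteq> 0"
  shows "beta (smul (- inverse z) (z ^ j, qint z j, 0, 1)) (smul (- inverse z) (1, 0, - qint z j * z, z ^ j))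
     = qint z j ^ 4 * z * (z^2 - z + 1) / (z ^ j)^2"
proof -
  let ?b = "qint z j" and ?w = "z ^ j"
  have s0: "- inverse z \<noteq> 0" using z0 by simp
  have "beta (smul (- inverse z) (?w, ?b, 0, 1)) (smul (- inverse z) (1, 0, - ?b * z, ?w))
      = (?b^2 * z) * (?b^2 * z + (?w - 1)^2) / ?w^2"
    unfolding beta_smul[OF s0 s0] using beta_A0B0[OF w0] by simp
  also have "(?w - 1)^2 = ((z - 1) * ?b)^2" using qint_mul[of z j] by simp
  also have "(?b^2 * z) * (?b^2 * z + ((z - 1) * ?b)^2) / ?w^2 = ?b ^ 4 * z * (z^2 - z + 1) / ?w^2"
    by (simp add: algebra_simps power2_eq_square power4_eq_xxxx)
  finally show ?thesis .
qed

lemma comm_id_commute: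
  assumes dA: "mdet A \<noteq> 0" and dB: "mdet B \<noteq> 0" and c: "comm A B = mat2_id"
  shows "mat2_mult A B = mat2_mult B A"
proof -
  have "mat2_mult (comm A B) (mat2_mult B A) = mat2_mult B A" using c by simp
  moreover have "mat2_mult (comm A B) (mat2_mult B A) = mat2_mult A B"
  proof -
    have "mat2_mult (comm A B) (mat2_mult B A)
        = mat2_mult (mat2_mult A B) (mat2_mult (minv A) (mat2_mult (mat2_mult (minv B) B) A))"
      unfolding comm_def by (simp add: mat2_mult_assoc)
    also have "\<dots> = mat2_mult A B" using minv_left[OF dA] minv_left[OF dB] by simp
    finally show ?thesis .
  qed
  ultimately show ?thesis by simp
qed

lemma high:
  assumes p: "primitive_root_of_unity n z" and n6: "n \<ge> 6" and V: "finite {Spoly x z | x. x > 1}"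
  shows False
proof -
  have n: "n > 0" "z ^ n = 1" using prim_pos[OF p] by auto
  have z1: "z \<noteq> 1" using prim_ne1[OF p] n6 by simp
  have z0: "z \<noteq> 0" using n by (metis power_0_left zero_neq_one not_gr0)
  have n2: "n \<ge> 2" using n6 by simp
  let ?G = "Mq z ` {cs. valid cs}"
  have G: "fgrp ?G" using G_fgrp[OF z0 n(2) z1 n2 V] .
  have s0: "- inverse z \<noteq> 0" using z0 by simp
  have nr: "z ^ m \<noteq> 1" if "0 < m" "m < n" for m using p that unfolding primitive_root_of_unity_def by blast
  show False
  proof (cases "n = 6")
    case True
    have "z ^ 6 = 1" using n True by simp
    moreover have "z ^ 3 \<noteq> 1" "z ^ 2 \<noteq> 1" using nr True by auto
    moreover have "(z^3 - 1) * (z^3 + 1) = z^6 - 1" by (simp add: algebra_simps power2_eq_square flip: power_add)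
    ultimately have "z^3 + 1 = 0" by simp
    moreover have "(z + 1) * (z^2 - z + 1) = z^3 + 1" by (simp add: algebra_simps power2_eq_square power3_eq_cube)
    moreover have "z + 1 \<noteq> 0"
    proof
      assume h: "z + 1 = 0"
      have "z = (z + 1) - 1" by simp
      hence "z = -1" using h by simp
      thus False using \<open>z^2 \<noteq> 1\<close> by simp
    qed
    ultimately have q: "z^2 - z + 1 = 0" by simp
    let ?A = "smul (- inverse z) (z ^ 1, qint z 1, 0, 1)"
    let ?B = "smul (- inverse z) (1, 0, - qint z 1 * z, z ^ 1)"
    have A: "?A \<in> ?G" and B: "?B \<in> ?G" using AB_in[OF z0 n(2) z1 n2 G] by blast+
    have K: "comm ?A ?B \<in> ?G" using fgrp_comm_in[OF G A B] .
    have dA: "mdet ?A \<noteq> 0" using fgrp_det[OF G A] .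
    have dB: "mdet ?B \<noteq> 0" using fgrp_det[OF G B] .
    have dK: "mdet (comm ?A ?B) = 1" using mdet_comm[OF dA dB] .
    have "beta ?A ?B = 0" using beta_AB[OF z0, of 1] z0 q by simp
    hence tK: "mtr (comm ?A ?B) = 2" unfolding beta_def by simp
    have "comm ?A ?B \<noteq> mat2_id"
    proof
      assume "comm ?A ?B = mat2_id"
      hence e: "mat2_mult ?A ?B = mat2_mult ?B ?A" using comm_id_commute[OF dA dB] by blast
      have h1: "fst (snd (mat2_mult ?A ?B)) = inverse z * inverse z * z" by (simp add: qint_def)
      have h2: "fst (snd (mat2_mult ?B ?A)) = inverse z * inverse z" by (simp add: qint_def)
      have e2: "fst (snd (mat2_mult ?A ?B)) = fst (snd (mat2_mult ?B ?A))" using e by (rule arg_cong)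
      have "inverse z * inverse z * z = inverse z * inverse z" using h1 h2 e2 by metis
      thus False using z0 z1 by simp
    qed
    thus False using parabolic[OF G K dK tK] by blast
  next
    case False
    hence n7: "n \<ge> 7" using n6 by simp
    obtain j where j: "j < n" "z ^ j = cis (2 * pi / n)" using root_exists[OF p] by blast
    define th where "th = 2 * pi / n"
    have th0: "0 < th" unfolding th_def using n by simp
    have th3: "th < pi / 3" unfolding th_def using n7 pi_gt_zero by (simp add: field_simps)
    have cth1: "cos th > 1/2" using cos_monotone_0_pi[of th "pi/3"] th0 th3 cos_60 by simp
    have cth2: "cos th < 1" using cos_monotone_0_pi[of 0 th] th0 th3 pi_gt_zero by simp
    define c where "c = 2 * cos th - 2"
    have c1: "-1 < c" "c < 0" unfolding c_def using cth1 cth2 by simp_all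
    define w where "w = z ^ j"
    have wc: "w = cis th" unfolding w_def th_def using j by simp
    have w0: "w \<noteq> 0" unfolding wc by simp
    have w1: "w \<noteq> 1"
    proof
      assume "w = 1" hence "Re (cis th) = 1" unfolding wc by simp
      thus False using cth2 by simp
    qed
    have tw: "(w + 1)^2 / w = complex_of_real (4 + c)"
    proof -
      have "(w + 1)^2 / w = w + inverse w + 2" using w0 by (simp add: field_simps power2_eq_square)
      also have "w + inverse w = complex_of_real (2 * cos th)" unfolding wc by (simp add: complex_eq_iff)
      finally show ?thesis unfolding c_def by simp
    qed
    let ?A = "smul (- inverse z) (z ^ j, qint z j, 0, 1)"
    let ?B = "smul (- inverse z) (1, 0, - qint z j * z, z ^ j)"
    have A: "?A \<in> ?G" and B: "?B \<in> ?G" using AB_in[OF z0 n(2) z1 n2 G] by blast+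
    have tA: "tau ?A = complex_of_real (4 + c)"
    proof -
      have "tau ?A = tau (z ^ j, qint z j, 0, 1)" by (rule tau_smul[OF s0])
      also have "\<dots> = (w + 1)^2 / w" using tau_A0[OF w0] unfolding w_def .
      also have "\<dots> = complex_of_real (4 + c)" by (rule tw)
      finally show ?thesis .
    qed
    have tB: "tau ?B = complex_of_real (4 + c)"
    proof -
      have "tau ?B = tau (1, 0, - qint z j * z, z ^ j)" by (rule tau_smul[OF s0])
      also have "\<dots> = (w + 1)^2 / w" using tau_B0[OF w0] unfolding w_def .
      also have "\<dots> = complex_of_real (4 + c)" by (rule tw)
      finally show ?thesis .
    qed
    have b0: "qint z j \<noteq> 0"
    proof
      assume "qint z j = 0"
      hence "w - 1 = 0" using qint_mul[of z j] unfolding w_def by simp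
      thus False using w1 by simp
    qed
    have q: "z^2 - z + 1 \<noteq> 0"
    proof
      assume q0: "z^2 - z + 1 = 0"
      have "(z + 1) * (z^2 - z + 1) = z^3 + 1" by (simp add: algebra_simps power2_eq_square power3_eq_cube)
      hence h3: "z^3 + 1 = 0" using q0 by simp
      have "z^3 = (z^3 + 1) - 1" by simp
      hence z3: "z^3 = -1" using h3 by simp
      have "z^6 = (z^3)^2" by (simp flip: power_mult)
      hence "z^6 = 1" using z3 by simp
      thus False using nr[of 6] n7 by simp
    qed
    have "beta ?A ?B = qint z j ^ 4 * z * (z^2 - z + 1) / w^2"
      using beta_AB[OF z0, of j] w0 unfolding w_def by simp
    hence nz: "beta ?A ?B \<noteq> 0" using b0 z0 q w0 by simp
    show False using core[OF G A B tA tB c1 nz] .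
  qed
qed

theorem corollary4p2:
  fixes \<zeta> :: complex
  assumes "\<zeta> \<noteq> 0"
  shows "finite {Spoly x \<zeta> | x :: rat. x > 1} \<longleftrightarrow>
         (\<exists>n\<in>{2, 3, 4, 5}. primitive_root_of_unity n \<zeta>)"
proof
  assume V: "finite {Spoly x \<zeta> | x :: rat. x > 1}"
  show "\<exists>n\<in>{2, 3, 4, 5}. primitive_root_of_unity n \<zeta>"
  proof (cases "\<exists>m>0. \<zeta> ^ m = 1")
    case False
    hence "infinite {Spoly x \<zeta> | x :: rat. x > 1}" using infinite_nonroot[OF assms] by blast
    thus ?thesis using V by blast
  next
    case True
    define n where "n = (LEAST m. m > 0 \<and> \<zeta> ^ m = 1)"
    have n: "n > 0 \<and> \<zeta> ^ n = 1" unfolding n_def using LeastI_ex[OF True] .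
    have nl: "\<zeta> ^ m \<noteq> 1" if "0 < m" "m < n" for m
      using not_less_Least[of m "\<lambda>m. m > 0 \<and> \<zeta> ^ m = 1"] that unfolding n_def by blast
    have p: "primitive_root_of_unity n \<zeta>" unfolding primitive_root_of_unity_def using n nl by blast
    show ?thesis
    proof (cases "n = 1")
      case True
      hence "\<zeta> = 1" using n by simp
      hence "infinite {Spoly x \<zeta> | x :: rat. x > 1}" using infinite_nonroot[OF assms] by blast
      thus ?thesis using V by blast
    next
      case False
      show ?thesis
      proof (cases "n \<le> 5")
        case True
        hence "n \<in> {2, 3, 4, 5}" using False n by auto
        thus ?thesis using p by blast
      next
        case False
        hence "n \<ge> 6" by simp
        thus ?thesis using high[OF p _ V] by blast
      qed
    qed
  qed
next
  assume "\<exists>n\<in>{2, 3, 4, 5}. primitive_root_of_unity n \<zeta>"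
  then obtain n where n: "n \<in> {2, 3, 4, 5}" and p: "primitive_root_of_unity n \<zeta>" by blast
  have pw: "\<zeta> ^ n = 1" using p unfolding primitive_root_of_unity_def by blast
  have nr: "\<zeta> ^ m \<noteq> 1" if "0 < m" "m < n" for m using p that unfolding primitive_root_of_unity_def by blast
  have z1: "\<zeta> - 1 \<noteq> 0" using nr[of 1] n by auto
  consider "n = 2" | "n = 3" | "n = 4" | "n = 5" using n by blast
  thus "finite {Spoly x \<zeta> | x :: rat. x > 1}"
  proof cases
    case 1
    have "(\<zeta> - 1) * (\<zeta> + 1) = \<zeta> ^ 2 - 1" by (simp add: algebra_simps power2_eq_square)
    hence "(\<zeta> - 1) * (\<zeta> + 1) = 0" using pw 1 by simp
    hence "\<zeta> + 1 = 0" using z1 by simp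
    thus ?thesis by (rule orbit_2)
  next
    case 2
    have "(\<zeta> - 1) * (1 + \<zeta> + \<zeta>^2) = \<zeta> ^ 3 - 1" by (simp add: algebra_simps power2_eq_square power3_eq_cube)
    hence "(\<zeta> - 1) * (1 + \<zeta> + \<zeta>^2) = 0" using pw 2 by simp
    hence "1 + \<zeta> + \<zeta>^2 = 0" using z1 by simp
    thus ?thesis by (rule orbit_3)
  next
    case 3
    have z2: "\<zeta>^2 - 1 \<noteq> 0" using nr[of 2] 3 by auto
    have "(\<zeta>^2 - 1) * (\<zeta>^2 + 1) = \<zeta> ^ 4 - 1" by (simp add: algebra_simps flip: power_add)
    hence "(\<zeta>^2 - 1) * (\<zeta>^2 + 1) = 0" using pw 3 by simp
    hence "\<zeta>^2 + 1 = 0" using z2 by simp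
    thus ?thesis by (rule orbit_4)
  next
    case 4
    have "(\<zeta> - 1) * (1 + \<zeta> + \<zeta>^2 + \<zeta>^3 + \<zeta>^4) = \<zeta> ^ 5 - 1" by algebra
    hence "(\<zeta> - 1) * (1 + \<zeta> + \<zeta>^2 + \<zeta>^3 + \<zeta>^4) = 0" using pw 4 by simp
    hence "1 + \<zeta> + \<zeta>^2 + \<zeta>^3 + \<zeta>^4 = 0" using z1 by simp
    thus ?thesis by (rule orbit_5)
  qed
qed

end
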